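(* Let $V:[0,+\infty)\to[0,+\infty)$ be a $C^1$ strictly increasing function with $\lim_{t\to\infty}V(t)=+\infty$, and let $S:=V'$. Let $(X,\mathsf d,\mathfrak m)$ be a metric measure space admitting the generalized asymptotic volume ratio $\mathrm{AVR}^V_{(X,\mathsf d,\mathfrak m)}$ associated to $V$, and suppose there is a constant $k>0$ such that $\mathfrak m(B_r(x))\le k\,V(r)$ for every $x\in X$ and every sufficiently large $r>0$. Let $(\rho_n)_{n\in\mathbb N}$ be mollifiers of radial type satisfying approximation of the identity of radial type associated to $V$. Let $p\ge 1$ and for $u\in L^p(X,\mathfrak m)$ set \[ \mathcal E_n(u):=\iint_{\{(x,y)\in X\times X:\,x\neq y\}}|u(x)-u(y)|^p\rho_n(x,y)\,\mathrm d\mathfrak m(x)\,\mathrm d\mathfrak m(y). \] Then for every $u\in L^p(X,\mathfrak m)$ such that $\mathcal E_{n_0}(u)<+\infty$ for some $n_0\in\mathbb N$, \[ \lim_{n\to\infty}\mathcal E_n(u)=2\,\mathrm{AVR}^V_{(X,\mathsf d,\mathfrak m)}\,\|u\|^p_{L^p}. \]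
   Context: A metric measure space is a triple $(X,\mathsf d,\mathfrak m)$ with $(X,\mathsf d)$ complete and separable and $\mathfrak m$ a locally finite non-negative Borel measure with full support. $(X,\mathsf d,\mathfrak m)$ admits the generalized asymptotic volume ratio associated to $V$ if there is $\mathrm{AVR}^V_{(X,\mathsf d,\mathfrak m)}\in[0,+\infty]$ such that for every $x_0\in X$, $\mathrm{AVR}^V_{(X,\mathsf d,\mathfrak m)}=\lim_{r\to+\infty}\mathfrak m(B_r(x_0))/V(r)$. Functions $\rho_n$ on $\{(x,y):x\neq y\}$ satisfy approximation of the identity of radial type associated to $V$ if there is a sequence of strictly decreasing functions $\tilde\rho_n\in C^1(0,+\infty)$ such that: (i) $\lim_{n\to\infty}\tilde\rho_n(r)=0$ for all $r>0$; $\lim_{r\to+\infty}\tilde\rho_n(r)V(r)=0$ for all $n$; and $\rho_n(x,y)=\tilde\rho_n(\mathsf d(x,y))$ for all $x\neq y$; (ii) for all $n>m$, $r\mapsto\tilde\rho_n(r)/\tilde\rho_m(r)$ is non-decreasing on $(0,+\infty)$; (iii) $\lim_{R\to+\infty}\lim_{n\to\infty}\int_R^{+\infty}S(r)\tilde\rho_n(r)\,\mathrm dr=1$. *)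

theory Defs
  imports "HOL-Analysis.Analysis"
begin

text \<open>A metric measure space: the metric space is the type (class polish_space,
i.e. complete and separable), the measure is a Borel measure which is locally finite
and has full support.\<close>
definition mms :: "('a::{polish_space,metric_space}) measure \<Rightarrow> bool" where
  "mms M \<longleftrightarrow> sets M = sets borel
     \<and> (\<forall>x. \<exists>r>0. emeasure M (ball x r) < \<infinity>)
     \<and> (\<forall>U. open U \<and> U \<noteq> {} \<longrightarrow> emeasure M U > 0)"

definition admissible_V :: "(real \<Rightarrow> real) \<Rightarrow> (real \<Rightarrow> real) \<Rightarrow> bool" where
  "admissible_V V S \<longleftrightarrow>
     (\<forall>t\<ge>0. V t \<ge> 0)
     \<and> (\<forall>t\<ge>0. (V has_real_derivative S t) (at t within {0..}))
     \<and> continuous_on {0..} S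
     \<and> strict_mono_on {0..} V
     \<and> filterlim V at_top at_top"

definition has_AVR :: "('a::metric_space) measure \<Rightarrow> (real \<Rightarrow> real) \<Rightarrow> ennreal \<Rightarrow> bool" where
  "has_AVR M V A \<longleftrightarrow>
     (\<forall>x0. ((\<lambda>r. emeasure M (ball x0 r) / ennreal (V r)) \<longlongrightarrow> A) at_top)"

definition approx_identity_radial ::
  "(real \<Rightarrow> real) \<Rightarrow> (real \<Rightarrow> real) \<Rightarrow> (nat \<Rightarrow> 'a::metric_space \<Rightarrow> 'a \<Rightarrow> real) \<Rightarrow> bool" where
  "approx_identity_radial V S \<rho> \<longleftrightarrow>
     (\<exists>\<rho>t :: nat \<Rightarrow> real \<Rightarrow> real.
        (\<forall>n. \<rho>t n C1_differentiable_on {0<..})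
      \<and> (\<forall>n r s. 0 < r \<longrightarrow> r < s \<longrightarrow> \<rho>t n s < \<rho>t n r)
      \<and> (\<forall>r>0. (\<lambda>n. \<rho>t n r) \<longlonglongrightarrow> 0)
      \<and> (\<forall>n. ((\<lambda>r. \<rho>t n r * V r) \<longlongrightarrow> 0) at_top)
      \<and> (\<forall>n x y. x \<noteq> y \<longrightarrow> \<rho> n x y = \<rho>t n (dist x y))
      \<and> (\<forall>n m. n > m \<longrightarrow> mono_on {0<..} (\<lambda>r. \<rho>t n r / \<rho>t m r))
      \<and> (\<exists>L :: real \<Rightarrow> ennreal.
           (\<forall>\<^sub>F R in at_top.
              ((\<lambda>n. \<integral>\<^sup>+ r. ennreal (S r * \<rho>t n r) * indicator {R..} r \<partial>lborel)
                 \<longlongrightarrow> L R) sequentially)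
           \<and> (L \<longlongrightarrow> 1) at_top))"

definition energy :: "('a::metric_space) measure \<Rightarrow> real \<Rightarrow> ('a \<Rightarrow> 'a \<Rightarrow> real) \<Rightarrow> ('a \<Rightarrow> real) \<Rightarrow> ennreal" where
  "energy M p \<rho> u =
     (\<integral>\<^sup>+ z. ennreal (\<bar>u (fst z) - u (snd z)\<bar> powr p * \<rho> (fst z) (snd z))
              * indicator {z. fst z \<noteq> snd z} z \<partial>(M \<Otimes>\<^sub>M M))"

definition in_Lp :: "'a measure \<Rightarrow> real \<Rightarrow> ('a \<Rightarrow> real) \<Rightarrow> bool" where
  "in_Lp M p u \<longleftrightarrow> u \<in> borel_measurable M \<and> (\<integral>\<^sup>+ x. ennreal (\<bar>u x\<bar> powr p) \<partial>M) < \<infinity>"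

definition Lp_norm_pow :: "'a measure \<Rightarrow> real \<Rightarrow> ('a \<Rightarrow> real) \<Rightarrow> ennreal" where
  "Lp_norm_pow M p u = (\<integral>\<^sup>+ x. ennreal (\<bar>u x\<bar> powr p) \<partial>M)"

end

theory Submission
  imports Defs
begin

lemma div_mult_cancel_ennreal: "(v::real) > 0 \<Longrightarrow> x / ennreal v * ennreal v = x"
  by (simp add: ennreal_divide_times)

lemma div_le_iff_ennreal:
  assumes v: "(v::real) > 0" shows "x / ennreal v \<le> b \<longleftrightarrow> x \<le> b * ennreal v"
proof
  assume "x / ennreal v \<le> b"
  then have "x / ennreal v * ennreal v \<le> b * ennreal v" by (rule mult_right_mono) simp
  then show "x \<le> b * ennreal v" using div_mult_cancel_ennreal[OF v] by simp
next
  assume "x \<le> b * ennreal v"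
  then have "x / ennreal v \<le> b * ennreal v / ennreal v" by (rule divide_right_mono_ennreal)
  then show "x / ennreal v \<le> b" using v by (simp add: mult_divide_eq_ennreal)
qed

lemma le_div_iff_ennreal:
  assumes v: "(v::real) > 0" shows "b \<le> x / ennreal v \<longleftrightarrow> b * ennreal v \<le> x"
proof
  assume "b \<le> x / ennreal v"
  then have "b * ennreal v \<le> x / ennreal v * ennreal v" by (rule mult_right_mono) simp
  then show "b * ennreal v \<le> x" using div_mult_cancel_ennreal[OF v] by simp
next
  assume "b * ennreal v \<le> x"
  then have "b * ennreal v / ennreal v \<le> x / ennreal v" by (rule divide_right_mono_ennreal)
  then show "b \<le> x / ennreal v" using v by (simp add: mult_divide_eq_ennreal)
qed

lemma div_less_iff_ennreal:
  assumes v: "(v::real) > 0" shows "x / ennreal v < b \<longleftrightarrow> x < b * ennreal v"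
  using le_div_iff_ennreal[OF v, of b x] by (meson not_le)

lemma less_div_iff_ennreal:
  assumes v: "(v::real) > 0" shows "b < x / ennreal v \<longleftrightarrow> b * ennreal v < x"
  using div_le_iff_ennreal[OF v, of x b] by (meson not_le)

lemma ev_upper:
  fixes X Y :: "'b \<Rightarrow> ennreal"
  assumes "eventually (\<lambda>n. X n \<le> Y n) F" "(Y \<longlongrightarrow> y) F" "y < w"
  shows "eventually (\<lambda>n. X n < w) F"
  using order_tendstoD(2)[OF assms(2,3)] assms(1) by eventually_elim (rule le_less_trans)

lemma ev_lower:
  fixes X Y E :: "'b \<Rightarrow> ennreal"
  assumes "eventually (\<lambda>n. Y n \<le> X n + E n) F" "(Y \<longlongrightarrow> y) F" "(E \<longlongrightarrow> 0) F" "w < y"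
  shows "eventually (\<lambda>n. w < X n) F"
proof -
  obtain w2 where w2: "w < w2" "w2 < y" using dense assms(4) by blast
  have "0 < w2 - w" using w2 by (metis diff_gr0_ennreal)
  have ev1: "eventually (\<lambda>n. w2 < Y n) F" by (rule order_tendstoD(1)[OF assms(2) w2(2)])
  have ev2: "eventually (\<lambda>n. E n < w2 - w) F" by (rule order_tendstoD(2)[OF assms(3) \<open>0 < w2 - w\<close>])
  from assms(1) ev1 ev2 show ?thesis
  proof eventually_elim
    case (elim n)
    show ?case
    proof (rule ccontr)
      assume "\<not> w < X n" then have "X n \<le> w" by simp
      have "w + E n < w2" using elim(3) w2(1) by (metis add.commute less_diff_eq_ennreal top.not_eq_extremum)
      then have "X n + E n < w2" using \<open>X n \<le> w\<close> by (meson add_right_mono le_less_trans)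
      with elim(1,2) show False by simp
    qed
  qed
qed

lemma convex_ineq_pos:
  fixes x y d p :: real
  assumes p: "p \<ge> 1" and d: "d > 0" and x: "x > 0" and y: "y > 0"
  shows "(x + y) powr p \<le> (1+d) powr (p-1) * x powr p + (1 + 1/d) powr (p-1) * y powr p"
proof -
  let ?l = "1/(1+d)"
  have l: "0 \<le> ?l" "?l \<le> 1" using d by auto
  have u: "(1+d)*x \<in> {0<..}" and v: "((1+d)/d)*y \<in> {0<..}" using d x y by auto
  have "((1 - ?l) * ((1+d)/d*y) + ?l * ((1+d)*x)) powr p \<le> (1 - ?l) * ((1+d)/d*y) powr p + ?l * ((1+d)*x) powr p"
    using convex_onD[OF powr_convex[OF p] l v u] by (metis real_scaleR_def)
  moreover have "(1 - ?l) * ((1+d)/d*y) + ?l * ((1+d)*x) = x + y"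
  proof -
    have "1 - ?l = d/(1+d)" using d by (simp add: field_simps)
    then show ?thesis using d by simp
  qed
  moreover have "?l * ((1+d)*x) powr p = (1+d) powr (p-1) * x powr p"
  proof -
    have "((1+d)*x) powr p = (1+d) powr p * x powr p" using d x by (simp add: powr_mult)
    moreover have "(1+d) powr (p-1) = (1+d) powr p / (1+d)" using d by (simp add: powr_diff)
    ultimately show ?thesis by simp
  qed
  moreover have "(1 - ?l) * ((1+d)/d*y) powr p = (1 + 1/d) powr (p-1) * y powr p"
  proof -
    have "1 - ?l = 1 / ((1+d)/d)" using d by (simp add: field_simps)
    moreover have "(1 + 1/d) = (1+d)/d" using d by (simp add: field_simps)
    moreover have "((1+d)/d*y) powr p = ((1+d)/d) powr p * y powr p" using powr_mult[of "(1+d)/d" y p] d y by simp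
    moreover have "((1+d)/d) powr (p-1) = ((1+d)/d) powr p / ((1+d)/d)" using d by (simp add: powr_diff)
    ultimately show ?thesis by simp
  qed
  ultimately show ?thesis by (simp add: add.commute)
qed

lemma convex_ineq:
  fixes a b d p :: real
  assumes p: "p \<ge> 1" and d: "d > 0"
  shows "\<bar>a - b\<bar> powr p \<le> (1+d) powr (p-1) * \<bar>a\<bar> powr p + (1 + 1/d) powr (p-1) * \<bar>b\<bar> powr p"
proof -
  have al: "(1+d) powr (p-1) \<ge> 1" using d p by (intro ge_one_powr_ge_zero) auto
  have be: "(1+1/d) powr (p-1) \<ge> 1" using d p by (intro ge_one_powr_ge_zero) auto
  have "\<bar>a - b\<bar> powr p \<le> (\<bar>a\<bar> + \<bar>b\<bar>) powr p" using p by (intro powr_mono2) auto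
  also have "\<dots> \<le> (1+d) powr (p-1) * \<bar>a\<bar> powr p + (1 + 1/d) powr (p-1) * \<bar>b\<bar> powr p"
  proof (cases "a = 0 \<or> b = 0")
    case True
    then show ?thesis
    proof
      assume "a = 0"
      then show ?thesis using be mult_right_mono[OF be, of "\<bar>b\<bar> powr p"] by simp
    next
      assume "b = 0"
      then show ?thesis using al mult_right_mono[OF al, of "\<bar>a\<bar> powr p"] by simp
    qed
  next
    case False
    then show ?thesis using convex_ineq_pos[OF p d, of "\<bar>a\<bar>" "\<bar>b\<bar>"] by simp
  qed
  finally show ?thesis .
qed

lemma ev_lower2:
  fixes X Y E :: "'b \<Rightarrow> ennreal"
  assumes "eventually (\<lambda>n. Y n \<le> X n + E n) F" "(Y \<longlongrightarrow> y) F" "(E \<longlongrightarrow> e) F" "w + e < y"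
  shows "eventually (\<lambda>n. w < X n) F"
proof -
  obtain w2 where w2: "w + e < w2" "w2 < y" using dense assms(4) by blast
  have we: "e < w2 - w" using w2(1)
    by (metis add.commute ennreal_add_less_top less_diff_eq_ennreal top.not_eq_extremum)
  have wfin: "w \<noteq> \<infinity>"
  proof
    assume "w = \<infinity>" then show False using w2(1) by simp
  qed
  have ev1: "eventually (\<lambda>n. w2 < Y n) F" by (rule order_tendstoD(1)[OF assms(2) w2(2)])
  have ev2: "eventually (\<lambda>n. E n < w2 - w) F" by (rule order_tendstoD(2)[OF assms(3) we])
  from assms(1) ev1 ev2 show ?thesis
  proof eventually_elim
    case (elim n)
    show ?case
    proof (rule ccontr)
      assume "\<not> w < X n" then have "X n \<le> w" by simp
      have "w \<le> w + e" by (rule add_increasing2) auto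
      then have "w \<le> w2" using w2(1) by (meson less_imp_le order.trans)
      have "w + E n < w + (w2 - w)" using elim(3) wfin by (simp add: ennreal_add_left_cancel_less)
      also have "w + (w2 - w) = w2" using \<open>w \<le> w2\<close> by (rule add_diff_inverse_ennreal)
      finally have "w + E n < w2" .
      then have "X n + E n < w2" using \<open>X n \<le> w\<close> by (meson add_right_mono le_less_trans)
      with elim(1,2) show False by simp
    qed
  qed
qed

locale setting =
  fixes M :: "'a::{polish_space,metric_space} measure"
    and V S :: "real \<Rightarrow> real"
    and rt D :: "nat \<Rightarrow> real \<Rightarrow> real"
    and A :: ennreal and L :: "real \<Rightarrow> ennreal" and k R0 :: real
  assumes sets_M: "sets M = sets borel"
  and V_nonneg: "\<And>t. t \<ge> 0 \<Longrightarrow> V t \<ge> 0"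
  and V_deriv: "\<And>t. t > 0 \<Longrightarrow> (V has_real_derivative S t) (at t)"
  and S_cont: "continuous_on {0<..} S"
  and V_mono: "strict_mono_on {0..} V"
  and rt_deriv: "\<And>n t. t > 0 \<Longrightarrow> (rt n has_real_derivative D n t) (at t)"
  and D_cont: "\<And>n. continuous_on {0<..} (D n)"
  and rt_dec: "\<And>n r s. 0 < r \<Longrightarrow> r < s \<Longrightarrow> rt n s < rt n r"
  and rt_lim: "\<And>r. r > 0 \<Longrightarrow> (\<lambda>n. rt n r) \<longlonglongrightarrow> 0"
  and rtV: "\<And>n. ((\<lambda>r. rt n r * V r) \<longlongrightarrow> 0) at_top"
  and ratio: "\<And>n m. n > m \<Longrightarrow> mono_on {0<..} (\<lambda>r. rt n r / rt m r)"
  and Lconv: "\<forall>\<^sub>F R in at_top. ((\<lambda>n. \<integral>\<^sup>+ r. ennreal (S r * rt n r) * indicator {R..} r \<partial>lborel) \<longlongrightarrow> L R) sequentially"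
  and Llim: "(L \<longlongrightarrow> 1) at_top"
  and k_pos: "k > 0" and R0_pos: "R0 > 0"
  and kbound: "\<And>r x. r \<ge> R0 \<Longrightarrow> emeasure M (ball x r) \<le> ennreal (k * V r)"
  and AVR: "\<And>x0. ((\<lambda>r. emeasure M (ball x0 r) / ennreal (V r)) \<longlongrightarrow> A) at_top"
begin

lemma space_M: "space M = UNIV"
  using sets_eq_imp_space_eq[OF sets_M] by simp

lemma V_pos: "t > 0 \<Longrightarrow> V t > 0"
  using V_mono V_nonneg[of 0] unfolding strict_mono_on_def
  by (metis atLeast_iff less_eq_real_def order.strict_trans1)

lemma V_le: "0 \<le> s \<Longrightarrow> s \<le> t \<Longrightarrow> V s \<le> V t"
  using V_mono unfolding strict_mono_on_def
  by (metis atLeast_iff order.trans less_eq_real_def order_refl)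

lemma S_nonneg: "t > 0 \<Longrightarrow> S t \<ge> 0"
proof (rule ccontr)
  assume t: "t > 0" and "\<not> S t \<ge> 0"
  then have "S t < 0" by simp
  from DERIV_neg_dec_right[OF V_deriv[OF t] this] obtain d where d: "d > 0"
    and h: "\<And>h. 0 < h \<Longrightarrow> h < d \<Longrightarrow> V (t + h) < V t" by blast
  have "V t < V (t + d/2)" using V_mono t d unfolding strict_mono_on_def by auto
  with h[of "d/2"] d show False by auto
qed

lemma D_nonpos: "t > 0 \<Longrightarrow> D n t \<le> 0"
proof (rule ccontr)
  assume t: "t > 0" and "\<not> D n t \<le> 0"
  then have "D n t > 0" by simp
  from DERIV_pos_inc_right[OF rt_deriv[OF t] this] obtain d where d: "d > 0"
    and h: "\<And>h. 0 < h \<Longrightarrow> h < d \<Longrightarrow> rt n t < rt n (t + h)" by blast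
  have "rt n (t + d/2) < rt n t" using rt_dec t d by auto
  with h[of "d/2"] d show False by auto
qed

lemma rt_inf: "(rt n \<longlongrightarrow> 0) at_top"
proof (rule Lim_null_comparison)
  show "\<forall>\<^sub>F r in at_top. norm (rt n r) \<le> \<bar>rt n r * V r\<bar> / V 1"
    using eventually_ge_at_top[of 1]
  proof eventually_elim
    case (elim r)
    have "V 1 \<le> V r" using V_le elim by simp
    moreover have "V 1 > 0" using V_pos by simp
    ultimately have "\<bar>rt n r\<bar> * V 1 \<le> \<bar>rt n r\<bar> * V r" by (simp add: mult_left_mono)
    also have "... = \<bar>rt n r * V r\<bar>" using \<open>V 1 > 0\<close> \<open>V 1 \<le> V r\<close> by (simp add: abs_mult)
    finally show ?case using \<open>V 1 > 0\<close> by (simp add: field_simps)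
  qed
  show "((\<lambda>r. \<bar>rt n r * V r\<bar> / V 1) \<longlongrightarrow> 0) at_top"
    using tendsto_divide[OF tendsto_rabs[OF rtV[of n]] tendsto_const[of "V 1"]] V_pos[of 1] by simp
qed

lemma rt_pos: "t > 0 \<Longrightarrow> rt n t > 0"
proof -
  assume t: "t > 0"
  have "0 \<le> rt n (t+1)"
  proof (rule tendsto_upperbound[OF rt_inf])
    show "\<forall>\<^sub>F x in at_top. rt n x \<le> rt n (t+1)"
      using eventually_ge_at_top[of "t+1"]
      by eventually_elim (metis add_pos_pos less_eq_real_def rt_dec t zero_less_one)
  qed simp
  moreover have "rt n (t+1) < rt n t" using rt_dec t by simp
  ultimately show ?thesis by simp
qed

lemma rt_mono: "0 < r \<Longrightarrow> r \<le> s \<Longrightarrow> rt n s \<le> rt n r"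
  using rt_dec by (metis less_eq_real_def order_refl)


lemma ball_finite: "emeasure M (ball x r) < \<infinity>"
proof -
  have "emeasure M (ball x r) \<le> emeasure M (ball x (max r R0))"
    by (rule emeasure_mono) (auto simp: sets_M)
  also have "\<dots> \<le> ennreal (k * V (max r R0))" by (rule kbound) simp
  finally show ?thesis by (simp add: order_le_less_trans)
qed

lemma cball_finite: "emeasure M (cball x r) < \<infinity>"
proof -
  have "emeasure M (cball x r) \<le> emeasure M (ball x (r+1))"
    by (rule emeasure_mono) (auto simp: sets_M)
  then show ?thesis using ball_finite[of x "r+1"] by (simp add: order_le_less_trans)
qed

sublocale sigma_finite_measure M
proof
  obtain x0 :: 'a where True by simp
  show "\<exists>A. countable A \<and> A \<subseteq> sets M \<and> \<Union> A = space M \<and> (\<forall>a\<in>A. emeasure M a \<noteq> \<infinity>)"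
  proof (intro exI conjI)
    show "countable (range (\<lambda>n::nat. ball x0 (real n)))" by simp
    show "range (\<lambda>n::nat. ball x0 (real n)) \<subseteq> sets M" by (auto simp: sets_M)
    show "\<Union> (range (\<lambda>n::nat. ball x0 (real n))) = space M"
      by (auto simp: space_M dist_commute intro: reals_Archimedean2)
    show "\<forall>a\<in>range (\<lambda>n::nat. ball x0 (real n)). emeasure M a \<noteq> \<infinity>"
      using ball_finite by (auto simp: less_top)
  qed
qed

lemma meas_M: "f \<in> measurable M N \<longleftrightarrow> f \<in> measurable borel N"
  unfolding measurable_cong_sets[OF sets_M refl] ..

lemma fst_borel[measurable]: "fst \<in> borel_measurable (M \<Otimes>\<^sub>M N)"
  using measurable_fst[of M N] by (simp add: measurable_cong_sets[OF refl sets_M])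

lemma snd_borel[measurable]: "snd \<in> borel_measurable (N \<Otimes>\<^sub>M M)"
  using measurable_snd[of N M] by (simp add: measurable_cong_sets[OF refl sets_M])

lemma dist_M[measurable]: "(\<lambda>y. dist x y) \<in> borel_measurable M"
  by (simp add: meas_M)

lemma cont_meas:
  fixes g :: "real \<Rightarrow> real"
  assumes "continuous_on {0<..} g" "X \<subseteq> {0<..}" "X \<in> sets borel"
  shows "(\<lambda>t. ennreal (g t) * indicator X t) \<in> borel_measurable borel"
proof -
  have m: "(\<lambda>t. indicator {0<..} t *\<^sub>R g t) \<in> borel_measurable borel"
    by (rule borel_measurable_continuous_on_indicator) (use assms in auto)
  have "(\<lambda>t. ennreal (indicator {0<..} t *\<^sub>R g t) * indicator X t) \<in> borel_measurable borel"
    using m assms(3) by measurable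
  moreover have "(\<lambda>t. ennreal (indicator {0<..} t *\<^sub>R g t) * indicator X t) = (\<lambda>t. ennreal (g t) * indicator X t)"
    using assms(2) by (auto simp: fun_eq_iff split: split_indicator)
  ultimately show ?thesis by simp
qed

lemma nn_FTC:
  fixes F f :: "real \<Rightarrow> real"
  assumes "a \<le> b" "\<And>x. a \<le> x \<Longrightarrow> x \<le> b \<Longrightarrow> (F has_real_derivative f x) (at x)"
    "\<And>x. a \<le> x \<Longrightarrow> x \<le> b \<Longrightarrow> 0 \<le> f x"
  shows "(\<integral>\<^sup>+x. ennreal (f x) * indicator {a..b} x \<partial>lborel) = ennreal (F b - F a)"
proof -
  have "(f has_integral (F b - F a)) {a..b}"
    by (rule fundamental_theorem_of_calculus[OF assms(1)])
       (use assms(2) in \<open>auto simp: has_real_derivative_iff_has_vector_derivative[symmetric] intro: has_field_derivative_at_within\<close>)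
  from nn_integral_has_integral_lebesgue[OF _ this] assms(3)
  have "(\<integral>\<^sup>+x. ennreal (indicator {a..b} x * f x) \<partial>lborel) = ennreal (F b - F a)" by auto
  moreover have "(\<lambda>x. ennreal (indicator {a..b} x * f x)) = (\<lambda>x. ennreal (f x) * indicator {a..b} x)"
    by (auto simp: fun_eq_iff split: split_indicator)
  ultimately show ?thesis by simp
qed

lemma LC_closed:
  assumes s: "s > 0"
  shows "ennreal (rt n s) = (\<integral>\<^sup>+t. ennreal (- D n t) * indicator {s..} t \<partial>lborel)"
proof -
  let ?f = "\<lambda>m::nat. \<lambda>t. ennreal (- D n t) * indicator {s..s + real m} t"
  have mf: "?f m \<in> borel_measurable lborel" for m
  proof -
    have "{s..s + real m} \<subseteq> {0<..}" using s by auto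
    from cont_meas[OF continuous_on_minus[OF D_cont[of n]] this]
    show ?thesis by simp
  qed
  have inc: "incseq ?f"
    by (auto simp: incseq_def le_fun_def split: split_indicator intro!: mult_left_mono)
  have lim: "(\<lambda>m. ?f m t) \<longlonglongrightarrow> ennreal (- D n t) * indicator {s..} t" for t
  proof (cases "s \<le> t")
    case True
    obtain m0 :: nat where "t - s \<le> real m0" using real_arch_simple by blast
    have "\<forall>\<^sub>F m in sequentially. ?f m t = ennreal (- D n t) * indicator {s..} t"
      using eventually_ge_at_top[of m0]
    proof eventually_elim
      case (elim m)
      then have "t \<le> s + real m" using \<open>t - s \<le> real m0\<close> by linarith
      with True show ?case by (auto split: split_indicator)
    qed
    then show ?thesis by (rule tendsto_eventually)
  next
    case False then show ?thesis by (auto split: split_indicator)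
  qed
  have eq: "integral\<^sup>N lborel (?f m) = ennreal (rt n s - rt n (s + real m))" for m
  proof -
    have "integral\<^sup>N lborel (?f m) = ennreal ((\<lambda>x. - rt n x) (s + real m) - (\<lambda>x. - rt n x) s)"
      by (rule nn_FTC) (use s in \<open>auto intro!: derivative_eq_intros rt_deriv D_nonpos\<close>)
    then show ?thesis by simp
  qed
  have "(\<lambda>m. integral\<^sup>N lborel (?f m)) \<longlonglongrightarrow> (\<integral>\<^sup>+t. ennreal (- D n t) * indicator {s..} t \<partial>lborel)"
    by (rule nn_integral_LIMSEQ[OF inc mf lim])
  moreover have "(\<lambda>m. integral\<^sup>N lborel (?f m)) \<longlonglongrightarrow> ennreal (rt n s)"
  proof -
    have "((\<lambda>m. rt n (s + real m)) \<longlongrightarrow> 0) sequentially"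
      by (rule filterlim_compose[OF rt_inf filterlim_tendsto_add_at_top[OF tendsto_const filterlim_real_sequentially]])
    then have "(\<lambda>m. rt n s - rt n (s + real m)) \<longlonglongrightarrow> rt n s"
      using tendsto_diff[OF tendsto_const[of "rt n s"]] by fastforce
    then show ?thesis unfolding eq by (rule tendsto_ennrealI)
  qed
  ultimately show ?thesis using LIMSEQ_unique by blast
qed

lemma AE_open_closed:
  fixes f :: "real \<Rightarrow> ennreal"
  shows "(\<integral>\<^sup>+t. f t * indicator {s..} t \<partial>lborel) = (\<integral>\<^sup>+t. f t * indicator {s<..} t \<partial>lborel)"
  by (rule nn_integral_cong_AE) (use AE_lborel_singleton[of s] in \<open>eventually_elim, auto split: split_indicator\<close>)

lemma LC:
  assumes s: "s > 0"
  shows "ennreal (rt n s) = (\<integral>\<^sup>+t. ennreal (- D n t) * indicator {s<..} t \<partial>lborel)"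
  using LC_closed[OF s] AE_open_closed by simp


definition Phi where
  "Phi n x R = (\<integral>\<^sup>+y. ennreal (rt n (dist x y)) * indicator {R<..} (dist x y) \<partial>M)"

lemma q_meas[measurable]:
  assumes "R \<ge> 0"
  shows "(\<lambda>t. ennreal (- D n t) * indicator {R<..} t) \<in> borel_measurable borel"
  using cont_meas[OF continuous_on_minus[OF D_cont[of n]], of "{R<..}"] assms by auto

lemma Phi_formula:
  assumes R: "R \<ge> 0"
  shows "Phi n x R = (\<integral>\<^sup>+t. ennreal (- D n t) * indicator {R<..} t *
                       emeasure M {y. R < dist x y \<and> dist x y < t} \<partial>lborel)"
proof -
  interpret P: pair_sigma_finite M lborel ..
  let ?F = "\<lambda>y t. ennreal (- D n t) * indicator {R<..} t * indicator {z. R < dist x (fst z) \<and> dist x (fst z) < snd z} (y, t)"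
  have 1: "ennreal (rt n (dist x y)) * indicator {R<..} (dist x y) = (\<integral>\<^sup>+t. ?F y t \<partial>lborel)" for y
  proof (cases "R < dist x y")
    case True
    then have "ennreal (rt n (dist x y)) * indicator {R<..} (dist x y) = (\<integral>\<^sup>+t. ennreal (- D n t) * indicator {dist x y<..} t \<partial>lborel)"
    proof -
      have "dist x y > 0" using True R by linarith
      from LC[OF this, of n] True show ?thesis by simp
    qed
    also have "\<dots> = (\<integral>\<^sup>+t. ?F y t \<partial>lborel)"
      by (rule nn_integral_cong) (use True in \<open>auto split: split_indicator\<close>)
    finally show ?thesis .
  next
    case False
    then show ?thesis by (simp split: split_indicator)
  qed
  have mF0: "(\<lambda>z. ?F (fst z) (snd z)) \<in> borel_measurable (M \<Otimes>\<^sub>M lborel)"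
  proof -
    have [measurable]: "(\<lambda>z. dist x (fst z)) \<in> borel_measurable (M \<Otimes>\<^sub>M lborel)" by measurable
    have [measurable]: "(\<lambda>z. ennreal (- D n (snd z)) * indicator {R<..} (snd z)) \<in> borel_measurable (M \<Otimes>\<^sub>M lborel)"
    proof -
      have "(\<lambda>t. ennreal (- D n t) * indicator {R<..} t) \<in> borel_measurable lborel"
        using q_meas[OF R, of n] by simp
      from measurable_compose[OF measurable_snd[of M lborel] this] show ?thesis by simp
    qed
    show ?thesis by measurable
  qed
  have mF: "(\<lambda>(y,t). ?F y t) \<in> borel_measurable (M \<Otimes>\<^sub>M lborel)"
    using mF0 by (simp add: case_prod_unfold)
  have "Phi n x R = (\<integral>\<^sup>+y. \<integral>\<^sup>+t. ?F y t \<partial>lborel \<partial>M)"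
    unfolding Phi_def using 1 by simp
  also have "\<dots> = (\<integral>\<^sup>+t. \<integral>\<^sup>+y. ?F y t \<partial>M \<partial>lborel)"
    using P.Fubini'[OF mF] by simp
  also have "\<dots> = (\<integral>\<^sup>+t. ennreal (- D n t) * indicator {R<..} t *
                       emeasure M {y. R < dist x y \<and> dist x y < t} \<partial>lborel)"
  proof (rule nn_integral_cong)
    fix t :: real
    have "(\<integral>\<^sup>+y. ?F y t \<partial>M) = (\<integral>\<^sup>+y. (ennreal (- D n t) * indicator {R<..} t) * indicator {y. R < dist x y \<and> dist x y < t} y \<partial>M)"
      by (rule nn_integral_cong) (auto split: split_indicator)
    also have "\<dots> = ennreal (- D n t) * indicator {R<..} t * emeasure M {y. R < dist x y \<and> dist x y < t}"
    proof (rule nn_integral_cmult_indicator)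
      have "{y \<in> space M. R < dist x y \<and> dist x y < t} \<in> sets M" by measurable
      then show "{y. R < dist x y \<and> dist x y < t} \<in> sets M" by (simp add: space_M)
    qed
    finally show "(\<integral>\<^sup>+y. ?F y t \<partial>M) = ennreal (- D n t) * indicator {R<..} t * emeasure M {y. R < dist x y \<and> dist x y < t}" .
  qed
  finally show ?thesis .
qed


definition In where
  "In n R = (\<integral>\<^sup>+ r. ennreal (S r * rt n r) * indicator {R..} r \<partial>lborel)"

definition J where
  "J n R = (\<integral>\<^sup>+t. ennreal (- D n t) * indicator {R<..} t * ennreal (V t) \<partial>lborel)"

lemma V_integral:
  assumes R: "R > 0" and t: "R < t"
  shows "ennreal (V t) = ennreal (V R) + (\<integral>\<^sup>+s. ennreal (S s) * indicator {R..} s * indicator {..<t} s \<partial>lborel)"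
proof -
  have "(\<integral>\<^sup>+s. ennreal (S s) * indicator {R..t} s \<partial>lborel) = ennreal (V t - V R)"
    by (rule nn_FTC) (use R t in \<open>auto intro!: V_deriv S_nonneg\<close>)
  moreover have "(\<integral>\<^sup>+s. ennreal (S s) * indicator {R..t} s \<partial>lborel) = (\<integral>\<^sup>+s. ennreal (S s) * indicator {R..} s * indicator {..<t} s \<partial>lborel)"
    by (rule nn_integral_cong_AE) (use AE_lborel_singleton[of t] in \<open>eventually_elim, auto split: split_indicator\<close>)
  moreover have "V R \<le> V t" "V R \<ge> 0" using V_le V_nonneg R t by auto
  ultimately show ?thesis by (simp add: ennreal_plus[symmetric] del: ennreal_plus)
qed

lemma J_eq:
  assumes R: "R > 0"
  shows "J n R = ennreal (V R * rt n R) + In n R"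
proof -
  let ?q = "\<lambda>t. ennreal (- D n t) * indicator {R<..} t"
  let ?s = "\<lambda>s. ennreal (S s) * indicator {R..} s"
  have qm[measurable]: "?q \<in> borel_measurable lborel" using q_meas[of R n] R by simp
  have sm[measurable]: "?s \<in> borel_measurable lborel"
  proof -
    have "{R..} \<subseteq> {0<..}" using R by auto
    from cont_meas[OF S_cont this] show ?thesis by simp
  qed
  have "J n R = (\<integral>\<^sup>+t. ?q t * (ennreal (V R) + (\<integral>\<^sup>+s. ?s s * indicator {..<t} s \<partial>lborel)) \<partial>lborel)"
    unfolding J_def
    by (rule nn_integral_cong) (use V_integral[OF R] in \<open>auto split: split_indicator\<close>)
  also have "\<dots> = (\<integral>\<^sup>+t. ?q t * ennreal (V R) \<partial>lborel) + (\<integral>\<^sup>+t. \<integral>\<^sup>+s. ?q t * (?s s * indicator {..<t} s) \<partial>lborel \<partial>lborel)"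
  proof -
    have m2: "(\<lambda>t. \<integral>\<^sup>+s. ?s s * indicator {..<t} s \<partial>lborel) \<in> borel_measurable lborel"
    proof -
      have "(\<lambda>(t,s). ?s s * indicator {..<t} s) \<in> borel_measurable (lborel \<Otimes>\<^sub>M lborel)"
      proof -
        have [measurable]: "(\<lambda>z. ?s (snd z)) \<in> borel_measurable (lborel \<Otimes>\<^sub>M lborel)"
          using measurable_compose[OF measurable_snd[of lborel lborel] sm] by simp
        have "(\<lambda>z. ?s (snd z) * indicator {z. snd z < fst z} z) \<in> borel_measurable (lborel \<Otimes>\<^sub>M lborel)"
          by measurable
        then show ?thesis by (simp add: case_prod_unfold indicator_def)
      qed
      from lborel.borel_measurable_nn_integral_fst[OF this] show ?thesis by simp
    qed
    have "(\<integral>\<^sup>+t. ?q t * (ennreal (V R) + (\<integral>\<^sup>+s. ?s s * indicator {..<t} s \<partial>lborel)) \<partial>lborel)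
       = (\<integral>\<^sup>+t. ?q t * ennreal (V R) + ?q t * (\<integral>\<^sup>+s. ?s s * indicator {..<t} s \<partial>lborel) \<partial>lborel)"
      by (simp add: distrib_left)
    also have "\<dots> = (\<integral>\<^sup>+t. ?q t * ennreal (V R) \<partial>lborel) + (\<integral>\<^sup>+t. ?q t * (\<integral>\<^sup>+s. ?s s * indicator {..<t} s \<partial>lborel) \<partial>lborel)"
      by (rule nn_integral_add) (use m2 in auto)
    also have "(\<integral>\<^sup>+t. ?q t * (\<integral>\<^sup>+s. ?s s * indicator {..<t} s \<partial>lborel) \<partial>lborel)
       = (\<integral>\<^sup>+t. \<integral>\<^sup>+s. ?q t * (?s s * indicator {..<t} s) \<partial>lborel \<partial>lborel)"
      by (rule nn_integral_cong) (rule nn_integral_cmult[symmetric], measurable)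
    finally show ?thesis .
  qed
  also have "(\<integral>\<^sup>+t. ?q t * ennreal (V R) \<partial>lborel) = ennreal (V R * rt n R)"
  proof -
    have "(\<integral>\<^sup>+t. ?q t * ennreal (V R) \<partial>lborel) = (\<integral>\<^sup>+t. ?q t \<partial>lborel) * ennreal (V R)"
      by (rule nn_integral_multc) simp
    also have "\<dots> = ennreal (rt n R) * ennreal (V R)" using LC[OF R, of n] by simp
    also have "\<dots> = ennreal (V R * rt n R)"
      using V_nonneg[of R] R rt_pos[OF R, of n] by (simp add: ennreal_mult mult.commute)
    finally show ?thesis .
  qed
  also have "(\<integral>\<^sup>+t. \<integral>\<^sup>+s. ?q t * (?s s * indicator {..<t} s) \<partial>lborel \<partial>lborel)
      = (\<integral>\<^sup>+s. \<integral>\<^sup>+t. ?q t * (?s s * indicator {..<t} s) \<partial>lborel \<partial>lborel)"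
  proof -
    have [measurable]: "(\<lambda>z. ?s (snd z)) \<in> borel_measurable (lborel \<Otimes>\<^sub>M lborel)"
      using measurable_compose[OF measurable_snd[of lborel lborel] sm] by simp
    have [measurable]: "(\<lambda>z. ?q (fst z)) \<in> borel_measurable (lborel \<Otimes>\<^sub>M lborel)"
      using measurable_compose[OF measurable_fst[of lborel lborel] qm] by simp
    have "(\<lambda>z. ?q (fst z) * (?s (snd z) * indicator {z. snd z < fst z} z)) \<in> borel_measurable (lborel \<Otimes>\<^sub>M lborel)"
      by measurable
    then have "(\<lambda>(t,s). ?q t * (?s s * indicator {..<t} s)) \<in> borel_measurable (lborel \<Otimes>\<^sub>M lborel)"
      by (simp add: case_prod_unfold indicator_def)
    from lborel_pair.Fubini'[OF this] show ?thesis by simp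
  qed
  also have "\<dots> = In n R"
    unfolding In_def
  proof (rule nn_integral_cong)
    fix s :: real
    show "(\<integral>\<^sup>+t. ?q t * (?s s * indicator {..<t} s) \<partial>lborel) = ennreal (S s * rt n s) * indicator {R..} s"
    proof (cases "R \<le> s")
      case True
      then have s0: "s > 0" using R by simp
      have "(\<integral>\<^sup>+t. ?q t * (?s s * indicator {..<t} s) \<partial>lborel) = (\<integral>\<^sup>+t. ennreal (- D n t) * indicator {s<..} t * ennreal (S s) \<partial>lborel)"
        by (rule nn_integral_cong) (use True in \<open>auto split: split_indicator\<close>)
      also have "\<dots> = ennreal (rt n s) * ennreal (S s)"
        by (subst nn_integral_multc) (use LC[OF s0, of n] q_meas[of s n] s0 in auto)
      finally show ?thesis using True s0 S_nonneg[OF s0] rt_pos[OF s0, of n]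
        by (simp add: ennreal_mult mult.commute)
    next
      case False then show ?thesis by simp
    qed
  qed
  finally show ?thesis .
qed


lemma rt_cont: "continuous_on {0<..} (rt n)"
  by (rule continuous_at_imp_continuous_on) (auto intro: DERIV_isCont rt_deriv)

lemma rtK_meas[measurable]:
  assumes "R \<ge> 0"
  shows "(\<lambda>r. ennreal (rt n r) * indicator {R<..} r) \<in> borel_measurable borel"
  using cont_meas[OF rt_cont, of "{R<..}"] assms by auto

lemma Phi_integrand_meas[measurable]:
  assumes "R \<ge> 0"
  shows "(\<lambda>y. ennreal (rt n (dist x y)) * indicator {R<..} (dist x y)) \<in> borel_measurable M"
  using measurable_compose[OF dist_M rtK_meas[OF assms]] by simp

lemma V_meas: "(\<lambda>t. ennreal (V t) * indicator {0<..} t) \<in> borel_measurable borel"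
proof -
  have "continuous_on {0<..} V"
    by (rule continuous_at_imp_continuous_on) (auto intro: DERIV_isCont V_deriv)
  from cont_meas[OF this] show ?thesis by simp
qed

lemma qV_meas[measurable]:
  assumes R: "R \<ge> 0"
  shows "(\<lambda>t. ennreal (- D n t) * indicator {R<..} t * ennreal (V t)) \<in> borel_measurable borel"
proof -
  have "(\<lambda>t. (ennreal (- D n t) * indicator {R<..} t) * (ennreal (V t) * indicator {0<..} t)) \<in> borel_measurable borel"
    using q_meas[OF R, of n] V_meas by measurable
  moreover have "(\<lambda>t. (ennreal (- D n t) * indicator {R<..} t) * (ennreal (V t) * indicator {0<..} t))
    = (\<lambda>t. ennreal (- D n t) * indicator {R<..} t * ennreal (V t))"
    using R by (auto simp: fun_eq_iff split: split_indicator)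
  ultimately show ?thesis by simp
qed

lemma Phi_upper_gen:
  assumes R: "R \<ge> 0" and b: "\<And>t. t > R \<Longrightarrow> emeasure M (ball x t) \<le> b * ennreal (V t)"
  shows "Phi n x R \<le> b * J n R"
proof -
  have "Phi n x R \<le> (\<integral>\<^sup>+t. b * (ennreal (- D n t) * indicator {R<..} t * ennreal (V t)) \<partial>lborel)"
    unfolding Phi_formula[OF R]
  proof (rule nn_integral_mono)
    fix t :: real
    show "ennreal (- D n t) * indicator {R<..} t * emeasure M {y. R < dist x y \<and> dist x y < t}
        \<le> b * (ennreal (- D n t) * indicator {R<..} t * ennreal (V t))"
    proof (cases "R < t")
      case True
      have "emeasure M {y. R < dist x y \<and> dist x y < t} \<le> emeasure M (ball x t)"
        by (rule emeasure_mono) (auto simp: sets_M)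
      also have "\<dots> \<le> b * ennreal (V t)" using b True by simp
      finally have "ennreal (- D n t) * emeasure M {y. R < dist x y \<and> dist x y < t} \<le> ennreal (- D n t) * (b * ennreal (V t))"
        by (rule mult_left_mono) simp
      then show ?thesis using True by (simp add: ac_simps)
    qed simp
  qed
  also have "\<dots> = b * J n R"
    unfolding J_def by (rule nn_integral_cmult) (use qV_meas[OF R, of n] in simp)
  finally show ?thesis .
qed

lemma Phi_upper:
  assumes R: "R \<ge> R0"
  shows "Phi n x R \<le> ennreal k * J n R"
proof (rule Phi_upper_gen)
  show "R \<ge> 0" using R R0_pos by simp
  fix t assume "t > R"
  then have "emeasure M (ball x t) \<le> ennreal (k * V t)" using kbound R by simp
  also have "\<dots> = ennreal k * ennreal (V t)" using k_pos V_nonneg[of t] \<open>t > R\<close> R R0_pos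
    by (simp add: ennreal_mult)
  finally show "emeasure M (ball x t) \<le> ennreal k * ennreal (V t)" .
qed

lemma Phi_lower_gen:
  assumes R: "R > 0" and a: "\<And>t. t > R \<Longrightarrow> a * ennreal (V t) \<le> emeasure M (ball x t)"
  shows "a * J n R \<le> Phi n x R + emeasure M (cball x R) * ennreal (rt n R)"
proof -
  let ?q = "\<lambda>t. ennreal (- D n t) * indicator {R<..} t"
  have "a * J n R = (\<integral>\<^sup>+t. a * (?q t * ennreal (V t)) \<partial>lborel)"
    unfolding J_def by (rule nn_integral_cmult[symmetric]) (use qV_meas[of R n] R in simp)
  also have "\<dots> \<le> (\<integral>\<^sup>+t. ?q t * emeasure M {y. R < dist x y \<and> dist x y < t} + emeasure M (cball x R) * ?q t \<partial>lborel)"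
  proof (rule nn_integral_mono)
    fix t :: real
    show "a * (?q t * ennreal (V t)) \<le> ?q t * emeasure M {y. R < dist x y \<and> dist x y < t} + emeasure M (cball x R) * ?q t"
    proof (cases "R < t")
      case True
      have "a * ennreal (V t) \<le> emeasure M (ball x t)" using a True by simp
      also have "\<dots> \<le> emeasure M ({y. R < dist x y \<and> dist x y < t} \<union> cball x R)"
        by (rule emeasure_mono) (auto simp: sets_M)
      also have "\<dots> \<le> emeasure M {y. R < dist x y \<and> dist x y < t} + emeasure M (cball x R)"
        by (rule emeasure_subadditive) (auto simp: sets_M)
      finally have "ennreal (- D n t) * (a * ennreal (V t)) \<le> ennreal (- D n t) * (emeasure M {y. R < dist x y \<and> dist x y < t} + emeasure M (cball x R))"
        by (rule mult_left_mono) simp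
      then show ?thesis using True by (simp add: ac_simps distrib_left)
    qed simp
  qed
  also have "\<dots> = (\<integral>\<^sup>+t. ?q t * emeasure M {y. R < dist x y \<and> dist x y < t} \<partial>lborel) + (\<integral>\<^sup>+t. emeasure M (cball x R) * ?q t \<partial>lborel)"
  proof (rule nn_integral_add)
    have "(\<lambda>t. \<integral>\<^sup>+y. ?q t * indicator {y. R < dist x y \<and> dist x y < t} y \<partial>M) \<in> borel_measurable lborel"
    proof (rule borel_measurable_nn_integral)
      have [measurable]: "(\<lambda>z. dist x (snd z)) \<in> borel_measurable (lborel \<Otimes>\<^sub>M M)" by measurable
      have [measurable]: "(\<lambda>z. ennreal (- D n (fst z)) * indicator {R<..} (fst z)) \<in> borel_measurable (lborel \<Otimes>\<^sub>M M)"
      proof -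
        have "?q \<in> borel_measurable lborel" using q_meas[of R n] R by simp
        from measurable_compose[OF measurable_fst[of lborel M] this] show ?thesis by simp
      qed
      have "(\<lambda>z. ennreal (- D n (fst z)) * indicator {R<..} (fst z) * indicator {z. R < dist x (snd z) \<and> dist x (snd z) < fst z} z) \<in> borel_measurable (lborel \<Otimes>\<^sub>M M)"
        by measurable
      then show "(\<lambda>(t, y). ?q t * indicator {y. R < dist x y \<and> dist x y < t} y) \<in> borel_measurable (lborel \<Otimes>\<^sub>M M)"
        by (simp add: indicator_def case_prod_unfold)
    qed
    moreover have "(\<integral>\<^sup>+y. ?q t * indicator {y. R < dist x y \<and> dist x y < t} y \<partial>M)
        = ?q t * emeasure M {y. R < dist x y \<and> dist x y < t}" for t
    proof (rule nn_integral_cmult_indicator)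
      have "{y \<in> space M. R < dist x y \<and> dist x y < t} \<in> sets M" by measurable
      then show "{y. R < dist x y \<and> dist x y < t} \<in> sets M" by (simp add: space_M)
    qed
    ultimately show "(\<lambda>t. ?q t * emeasure M {y. R < dist x y \<and> dist x y < t}) \<in> borel_measurable lborel"
      by simp
    show "(\<lambda>t. emeasure M (cball x R) * ?q t) \<in> borel_measurable lborel"
      using q_meas[of R n] R by simp
  qed
  also have "\<dots> = Phi n x R + emeasure M (cball x R) * ennreal (rt n R)"
    using Phi_formula[of R n x] R LC[OF R, of n]
    by (simp add: nn_integral_cmult q_meas)
  finally show ?thesis .
qed

lemma Phi_split:
  assumes R: "R > 0" "R \<le> R'"
  shows "Phi n x R \<le> Phi n x R' + ennreal (rt n R) * emeasure M (cball x R')"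
proof -
  have "Phi n x R \<le> (\<integral>\<^sup>+y. ennreal (rt n (dist x y)) * indicator {R'<..} (dist x y) + ennreal (rt n R) * indicator (cball x R') y \<partial>M)"
    unfolding Phi_def
  proof (rule nn_integral_mono)
    fix y
    show "ennreal (rt n (dist x y)) * indicator {R<..} (dist x y) \<le> ennreal (rt n (dist x y)) * indicator {R'<..} (dist x y) + ennreal (rt n R) * indicator (cball x R') y"
    proof (cases "R < dist x y")
      case True
      then have "rt n (dist x y) \<le> rt n R" using rt_mono R by simp
      then show ?thesis using True by (auto split: split_indicator simp: dist_commute intro: ennreal_leI)
    qed simp
  qed
  also have "\<dots> = Phi n x R' + ennreal (rt n R) * emeasure M (cball x R')"
  proof -
    have cb[measurable]: "cball x R' \<in> sets M" by (simp add: sets_M)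
    have "(\<integral>\<^sup>+y. ennreal (rt n (dist x y)) * indicator {R'<..} (dist x y) + ennreal (rt n R) * indicator (cball x R') y \<partial>M)
      = (\<integral>\<^sup>+y. ennreal (rt n (dist x y)) * indicator {R'<..} (dist x y) \<partial>M) + (\<integral>\<^sup>+y. ennreal (rt n R) * indicator (cball x R') y \<partial>M)"
      by (rule nn_integral_add) (use R in auto)
    also have "\<dots> = Phi n x R' + ennreal (rt n R) * emeasure M (cball x R')"
      by (simp only: Phi_def nn_integral_cmult_indicator[OF cb])
    finally show ?thesis .
  qed
  finally show ?thesis .
qed

lemma Phi_mono:
  assumes R: "0 \<le> R" "R \<le> R'"
  shows "Phi n x R' \<le> Phi n x R"
  unfolding Phi_def
  by (rule nn_integral_mono) (use R in \<open>auto split: split_indicator\<close>)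

lemma A_le_k: "A \<le> ennreal k"
proof -
  obtain x0 :: 'a where True by simp
  show ?thesis
  proof (rule tendsto_upperbound[OF AVR[of x0]])
    show "\<forall>\<^sub>F r in at_top. emeasure M (ball x0 r) / ennreal (V r) \<le> ennreal k"
      using eventually_ge_at_top[of R0]
    proof eventually_elim
      case (elim r)
      then have r: "r > 0" using R0_pos by simp
      have "emeasure M (ball x0 r) \<le> ennreal (k * V r)" using kbound elim by simp
      also have "\<dots> = ennreal k * ennreal (V r)" using k_pos V_pos[OF r] by (simp add: ennreal_mult)
      finally show ?case using V_pos[OF r]
        by (simp add: div_le_iff_ennreal)
    qed
  qed simp
qed


lemma avr_upper_ev:
  assumes "A < b"
  shows "eventually (\<lambda>R'. \<forall>t>R'. emeasure M (ball x t) \<le> b * ennreal (V t)) at_top"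
proof -
  have "eventually (\<lambda>t. emeasure M (ball x t) / ennreal (V t) < b) at_top"
    by (rule order_tendstoD(2)[OF AVR[of x] assms])
  then obtain T where T: "\<And>t. t \<ge> T \<Longrightarrow> emeasure M (ball x t) / ennreal (V t) < b"
    by (auto simp: eventually_at_top_linorder)
  show ?thesis using eventually_ge_at_top[of "max T 1"]
  proof eventually_elim
    case (elim R')
    show ?case
    proof (intro allI impI)
      fix t assume "t > R'"
      then have t: "t \<ge> T" "t > 0" using elim by auto
      from T[OF t(1)] show "emeasure M (ball x t) \<le> b * ennreal (V t)"
        using div_less_iff_ennreal[OF V_pos[OF t(2)]] by (simp add: less_imp_le)
    qed
  qed
qed

lemma avr_lower_ev:
  assumes "a < A"
  shows "eventually (\<lambda>R'. \<forall>t>R'. a * ennreal (V t) \<le> emeasure M (ball x t)) at_top"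
proof -
  have "eventually (\<lambda>t. a < emeasure M (ball x t) / ennreal (V t)) at_top"
    by (rule order_tendstoD(1)[OF AVR[of x] assms])
  then obtain T where T: "\<And>t. t \<ge> T \<Longrightarrow> a < emeasure M (ball x t) / ennreal (V t)"
    by (auto simp: eventually_at_top_linorder)
  show ?thesis using eventually_ge_at_top[of "max T 1"]
  proof eventually_elim
    case (elim R')
    show ?case
    proof (intro allI impI)
      fix t assume "t > R'"
      then have t: "t \<ge> T" "t > 0" using elim by auto
      from T[OF t(1)] show "a * ennreal (V t) \<le> emeasure M (ball x t)"
        using less_div_iff_ennreal[OF V_pos[OF t(2)]] by (simp add: less_imp_le)
    qed
  qed
qed

lemma J_lim:
  assumes R: "R > 0" and I: "(\<lambda>n. In n R) \<longlonglongrightarrow> L R"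
  shows "(\<lambda>n. J n R) \<longlonglongrightarrow> L R"
proof -
  have "(\<lambda>n. ennreal (V R * rt n R)) \<longlonglongrightarrow> ennreal (V R * 0)"
    by (intro tendsto_ennrealI tendsto_mult tendsto_const rt_lim R)
  from tendsto_add[OF this I] show ?thesis by (simp add: J_eq[OF R])
qed

lemma cross_lim: "R > 0 \<Longrightarrow> (\<lambda>n. ennreal (rt n R) * emeasure M (cball x R')) \<longlonglongrightarrow> 0"
proof -
  assume R: "R > 0"
  have "(\<lambda>n. ennreal (rt n R)) \<longlonglongrightarrow> ennreal 0" by (intro tendsto_ennrealI rt_lim R)
  from tendsto_mult_ennreal[OF this tendsto_const[of "emeasure M (cball x R')"]]
  show ?thesis using cball_finite[of x R'] by simp
qed

lemma cross_lim': "R > 0 \<Longrightarrow> (\<lambda>n. emeasure M (cball x R') * ennreal (rt n R)) \<longlonglongrightarrow> 0"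
  using cross_lim by (simp add: mult.commute)

lemma Lconv': "\<forall>\<^sub>F R in at_top. (\<lambda>n. In n R) \<longlonglongrightarrow> L R"
  using Lconv unfolding In_def .

lemma Phi_lim:
  assumes R: "R > 0"
  shows "(\<lambda>n. Phi n x R) \<longlonglongrightarrow> A"
proof (rule order_tendstoI)
  fix w assume "A < w"
  obtain b where b: "A < b" "b < w" using dense \<open>A < w\<close> by blast
  have bfin: "b \<noteq> \<infinity>" "b \<noteq> 0" using b by auto
  have "eventually (\<lambda>R'. b * L R' < w) at_top"
  proof (rule order_tendstoD(2))
    show "((\<lambda>R'. b * L R') \<longlongrightarrow> b * 1) at_top"
      by (rule tendsto_mult_ennreal[OF tendsto_const Llim]) (use bfin in auto)
  qed (use b in simp)
  then have "eventually (\<lambda>R'. b * L R' < w \<and> (\<forall>t>R'. emeasure M (ball x t) \<le> b * ennreal (V t))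
       \<and> ((\<lambda>n. In n R') \<longlonglongrightarrow> L R') \<and> R' \<ge> R) at_top"
    using avr_upper_ev[OF b(1), of x] Lconv' eventually_ge_at_top[of R]
    by (simp add: eventually_conj_iff)
  then obtain R' where R': "b * L R' < w" "\<And>t. t > R' \<Longrightarrow> emeasure M (ball x t) \<le> b * ennreal (V t)"
      "(\<lambda>n. In n R') \<longlonglongrightarrow> L R'" "R' \<ge> R"
    by (auto simp: eventually_at_top_linorder)
  have R'0: "R' > 0" using R R' by simp
  show "\<forall>\<^sub>F n in sequentially. Phi n x R < w"
  proof (rule ev_upper)
    show "\<forall>\<^sub>F n in sequentially. Phi n x R \<le> b * J n R' + ennreal (rt n R) * emeasure M (cball x R')"
    proof (intro always_eventually allI)
      fix n
      have "Phi n x R \<le> Phi n x R' + ennreal (rt n R) * emeasure M (cball x R')"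
        by (rule Phi_split) (use R R' in auto)
      also have "Phi n x R' \<le> b * J n R'" by (rule Phi_upper_gen) (use R'0 R' in auto)
      finally show "Phi n x R \<le> b * J n R' + ennreal (rt n R) * emeasure M (cball x R')"
        by (simp add: add_right_mono)
    qed
    show "(\<lambda>n. b * J n R' + ennreal (rt n R) * emeasure M (cball x R')) \<longlonglongrightarrow> b * L R' + 0"
      by (intro tendsto_add tendsto_mult_ennreal[OF tendsto_const J_lim[OF R'0 R'(3)]] cross_lim R)
         (use bfin in auto)
  qed (use R' in simp)
next
  fix w assume "w < A"
  obtain a where a: "w < a" "a < A" using dense \<open>w < A\<close> by blast
  have afin: "a \<noteq> \<infinity>" "a \<noteq> 0" using a A_le_k by (auto simp: top_unique)
  have "eventually (\<lambda>R'. w < a * L R') at_top"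
  proof (rule order_tendstoD(1))
    show "((\<lambda>R'. a * L R') \<longlongrightarrow> a * 1) at_top"
      by (rule tendsto_mult_ennreal[OF tendsto_const Llim]) (use afin in auto)
  qed (use a in simp)
  then have "eventually (\<lambda>R'. w < a * L R' \<and> (\<forall>t>R'. a * ennreal (V t) \<le> emeasure M (ball x t))
       \<and> ((\<lambda>n. In n R') \<longlonglongrightarrow> L R') \<and> R' \<ge> R) at_top"
    using avr_lower_ev[OF a(2), of x] Lconv' eventually_ge_at_top[of R]
    by (simp add: eventually_conj_iff)
  then obtain R' where R': "w < a * L R'" "\<And>t. t > R' \<Longrightarrow> a * ennreal (V t) \<le> emeasure M (ball x t)"
      "(\<lambda>n. In n R') \<longlonglongrightarrow> L R'" "R' \<ge> R"
    by (auto simp: eventually_at_top_linorder)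
  have R'0: "R' > 0" using R R' by simp
  show "\<forall>\<^sub>F n in sequentially. w < Phi n x R"
  proof (rule ev_lower)
    show "\<forall>\<^sub>F n in sequentially. a * J n R' \<le> Phi n x R + emeasure M (cball x R') * ennreal (rt n R')"
    proof (intro always_eventually allI)
      fix n
      have "a * J n R' \<le> Phi n x R' + emeasure M (cball x R') * ennreal (rt n R')"
        by (rule Phi_lower_gen) (use R'0 R' in auto)
      also have "Phi n x R' \<le> Phi n x R" by (rule Phi_mono) (use R R' in auto)
      finally show "a * J n R' \<le> Phi n x R + emeasure M (cball x R') * ennreal (rt n R')"
        by (simp add: add_right_mono)
    qed
    show "(\<lambda>n. a * J n R') \<longlonglongrightarrow> a * L R'"
      by (intro tendsto_mult_ennreal[OF tendsto_const J_lim[OF R'0 R'(3)]]) (use afin in auto)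
    show "(\<lambda>n. emeasure M (cball x R') * ennreal (rt n R')) \<longlonglongrightarrow> 0"
      by (rule cross_lim'[OF R'0])
  qed (use R' in simp)
qed

end


lemma nn_integral_add5:
  assumes [measurable]: "a \<in> borel_measurable N" "b \<in> borel_measurable N" "c \<in> borel_measurable N"
    "d \<in> borel_measurable N" "e \<in> borel_measurable N"
  shows "(\<integral>\<^sup>+z. a z + b z + c z + d z + e z \<partial>N) = integral\<^sup>N N a + integral\<^sup>N N b + integral\<^sup>N N c + integral\<^sup>N N d + integral\<^sup>N N e"
proof -
  have "(\<integral>\<^sup>+z. a z + b z + c z + d z + e z \<partial>N) = (\<integral>\<^sup>+z. a z + b z + c z + d z \<partial>N) + integral\<^sup>N N e"
    by (rule nn_integral_add) measurable
  also have "(\<integral>\<^sup>+z. a z + b z + c z + d z \<partial>N) = (\<integral>\<^sup>+z. a z + b z + c z \<partial>N) + integral\<^sup>N N d"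
    by (rule nn_integral_add) measurable
  also have "(\<integral>\<^sup>+z. a z + b z + c z \<partial>N) = (\<integral>\<^sup>+z. a z + b z \<partial>N) + integral\<^sup>N N c"
    by (rule nn_integral_add) measurable
  also have "(\<integral>\<^sup>+z. a z + b z \<partial>N) = integral\<^sup>N N a + integral\<^sup>N N b"
    by (rule nn_integral_add) measurable
  finally show ?thesis .
qed

lemma nn_integral_add4:
  assumes [measurable]: "a \<in> borel_measurable N" "b \<in> borel_measurable N" "c \<in> borel_measurable N"
    "d \<in> borel_measurable N"
  shows "(\<integral>\<^sup>+z. a z + b z + c z + d z \<partial>N) = integral\<^sup>N N a + integral\<^sup>N N b + integral\<^sup>N N c + integral\<^sup>N N d"
proof -
  have "(\<integral>\<^sup>+z. a z + b z + c z + d z \<partial>N) = (\<integral>\<^sup>+z. a z + b z + c z \<partial>N) + integral\<^sup>N N d"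
    by (rule nn_integral_add) measurable
  also have "(\<integral>\<^sup>+z. a z + b z + c z \<partial>N) = (\<integral>\<^sup>+z. a z + b z \<partial>N) + integral\<^sup>N N c"
    by (rule nn_integral_add) measurable
  also have "(\<integral>\<^sup>+z. a z + b z \<partial>N) = integral\<^sup>N N a + integral\<^sup>N N b"
    by (rule nn_integral_add) measurable
  finally show ?thesis .
qed

locale main_setting = setting M V S rt D A L k R0
  for M :: "'a::{polish_space,metric_space} measure" and V S rt D A L k R0 +
  fixes u :: "'a \<Rightarrow> real" and p :: real
  assumes p1: "p \<ge> 1" and u_meas[measurable]: "u \<in> borel_measurable M"
    and u_int: "(\<integral>\<^sup>+x. ennreal (\<bar>u x\<bar> powr p) \<partial>M) < \<infinity>"
begin

definition K where
  "K n R z = ennreal (rt n (dist (fst z) (snd z))) * indicator {R<..} (dist (fst z) (snd z))"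

lemma dist_pair_meas[measurable]: "(\<lambda>z. dist (fst z) (snd z)) \<in> borel_measurable (M \<Otimes>\<^sub>M M)"
  by measurable

lemma K_meas[measurable]: "R \<ge> 0 \<Longrightarrow> K n R \<in> borel_measurable (M \<Otimes>\<^sub>M M)"
  unfolding K_def using measurable_compose[OF dist_pair_meas rtK_meas] by simp

lemma Phi_K: "Phi n x R = (\<integral>\<^sup>+y. K n R (x, y) \<partial>M)"
  unfolding Phi_def K_def by simp

lemma Phi_meas[measurable]: "R \<ge> 0 \<Longrightarrow> (\<lambda>x. Phi n x R) \<in> borel_measurable M"
  unfolding Phi_K by (rule borel_measurable_nn_integral) (simp add: case_prod_unfold K_meas)

lemma K_x_meas[measurable]: "R \<ge> 0 \<Longrightarrow> (\<lambda>y. K n R (x, y)) \<in> borel_measurable M"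
  unfolding K_def using Phi_integrand_meas[of R n x] by simp

lemma TK1:
  assumes R: "R \<ge> 0" and h[measurable]: "h \<in> borel_measurable M"
  shows "(\<integral>\<^sup>+z. K n R z * h (fst z) \<partial>(M \<Otimes>\<^sub>M M)) = (\<integral>\<^sup>+x. h x * Phi n x R \<partial>M)"
proof -
  have "(\<integral>\<^sup>+z. K n R z * h (fst z) \<partial>(M \<Otimes>\<^sub>M M)) = (\<integral>\<^sup>+x. \<integral>\<^sup>+y. K n R (x, y) * h x \<partial>M \<partial>M)"
  proof -
    have mm: "(\<lambda>z. K n R z * h (fst z)) \<in> borel_measurable (M \<Otimes>\<^sub>M M)" using R by measurable
    show ?thesis using nn_integral_fst[OF mm] by simp
  qed
  also have "\<dots> = (\<integral>\<^sup>+x. h x * Phi n x R \<partial>M)"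
  proof (rule nn_integral_cong)
    fix x
    have "(\<integral>\<^sup>+y. K n R (x, y) * h x \<partial>M) = (\<integral>\<^sup>+y. K n R (x, y) \<partial>M) * h x"
      by (rule nn_integral_multc) (use R in simp)
    then show "(\<integral>\<^sup>+y. K n R (x, y) * h x \<partial>M) = h x * Phi n x R" by (simp add: Phi_K mult.commute)
  qed
  finally show ?thesis .
qed

lemma TK2:
  assumes R: "R \<ge> 0" and h[measurable]: "h \<in> borel_measurable M"
  shows "(\<integral>\<^sup>+z. K n R z * h (snd z) \<partial>(M \<Otimes>\<^sub>M M)) = (\<integral>\<^sup>+y. h y * Phi n y R \<partial>M)"
proof -
  interpret P: pair_sigma_finite M M ..
  have "(\<integral>\<^sup>+z. K n R z * h (snd z) \<partial>(M \<Otimes>\<^sub>M M)) = (\<integral>\<^sup>+y. \<integral>\<^sup>+x. K n R (x, y) * h y \<partial>M \<partial>M)"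
  proof -
    have mm: "(\<lambda>z. K n R z * h (snd z)) \<in> borel_measurable (M \<Otimes>\<^sub>M M)" using R by measurable
    show ?thesis using P.nn_integral_snd[OF mm] by simp
  qed
  also have "\<dots> = (\<integral>\<^sup>+y. h y * Phi n y R \<partial>M)"
  proof (rule nn_integral_cong)
    fix y
    have "(\<integral>\<^sup>+x. K n R (x, y) * h y \<partial>M) = (\<integral>\<^sup>+x. K n R (y, x) \<partial>M) * h y"
    proof -
      have "(\<integral>\<^sup>+x. K n R (x, y) * h y \<partial>M) = (\<integral>\<^sup>+x. K n R (y, x) * h y \<partial>M)"
        by (simp add: K_def dist_commute)
      also have "\<dots> = (\<integral>\<^sup>+x. K n R (y, x) \<partial>M) * h y"
        by (rule nn_integral_multc) (use R in simp)
      finally show ?thesis .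
    qed
    then show "(\<integral>\<^sup>+x. K n R (x, y) * h y \<partial>M) = h y * Phi n y R"
      by (simp add: Phi_K mult.commute)
  qed
  finally show ?thesis .
qed

lemma K_le: "R > 0 \<Longrightarrow> K n R z \<le> ennreal (rt n R)"
  unfolding K_def using rt_mono[of R "dist (fst z) (snd z)" n]
  by (auto split: split_indicator intro: ennreal_leI)


definition fp where "fp x = ennreal (\<bar>u x\<bar> powr p)"
definition gp where "gp z = ennreal (\<bar>u (fst z) - u (snd z)\<bar> powr p)"
definition Far where "Far n R = (\<integral>\<^sup>+z. gp z * K n R z \<partial>(M \<Otimes>\<^sub>M M))"
definition P where "P n R B = (\<integral>\<^sup>+x. (fp x * indicator B x) * Phi n x R \<partial>M)"
definition Q where "Q n R B = (\<integral>\<^sup>+x. (fp x * indicator (- B) x) * Phi n x R \<partial>M)"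
definition GB where "GB B = (\<integral>\<^sup>+z. indicator B (fst z) * indicator B (snd z) * gp z \<partial>(M \<Otimes>\<^sub>M M))"
definition HB where "HB B = (\<integral>\<^sup>+z. indicator B (fst z) * indicator B (snd z) * (fp (fst z) + fp (snd z)) \<partial>(M \<Otimes>\<^sub>M M))"

lemma fp_meas[measurable]: "fp \<in> borel_measurable M"
  unfolding fp_def by measurable

lemma gp_meas[measurable]: "gp \<in> borel_measurable (M \<Otimes>\<^sub>M M)"
  unfolding gp_def by measurable

lemma cv_enn:
  assumes d: "d > 0"
  shows "ennreal (\<bar>a - b\<bar> powr p) \<le> ennreal ((1+d) powr (p-1)) * ennreal (\<bar>a\<bar> powr p) + ennreal ((1+1/d) powr (p-1)) * ennreal (\<bar>b\<bar> powr p)"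
proof -
  have "ennreal (\<bar>a - b\<bar> powr p) \<le> ennreal ((1+d) powr (p-1) * \<bar>a\<bar> powr p + (1 + 1/d) powr (p-1) * \<bar>b\<bar> powr p)"
    by (rule ennreal_leI) (rule convex_ineq[OF p1 d])
  also have "\<dots> = ennreal ((1+d) powr (p-1)) * ennreal (\<bar>a\<bar> powr p) + ennreal ((1+1/d) powr (p-1)) * ennreal (\<bar>b\<bar> powr p)"
    by (simp add: ennreal_plus[symmetric] ennreal_mult[symmetric] del: ennreal_plus)
  finally show ?thesis .
qed

lemma al_le_be:
  assumes "0 < d" "d \<le> 1"
  shows "ennreal ((1+d) powr (p-1)) \<le> ennreal ((1+1/d) powr (p-1))"
proof (rule ennreal_leI, rule powr_mono2)
  show "1 + d \<le> 1 + 1/d" using assms by (simp add: field_simps) (metis mult_le_one less_imp_le assms)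
qed (use assms p1 in auto)

lemma far_upper_pt:
  assumes R: "R > 0" and d: "0 < d" "d \<le> 1"
  defines "al \<equiv> ennreal ((1+d) powr (p-1))" and "be \<equiv> ennreal ((1+1/d) powr (p-1))"
  shows "gp z * K n R z \<le> K n R z * (al * (fp (fst z) * indicator B (fst z))) + K n R z * (al * (fp (snd z) * indicator B (snd z)))
     + K n R z * (be * (fp (fst z) * indicator (-B) (fst z))) + K n R z * (be * (fp (snd z) * indicator (-B) (snd z)))
     + ennreal (rt n R) * (indicator B (fst z) * indicator B (snd z) * gp z)"
proof -
  obtain x y where z: "z = (x, y)" by (cases z)
  have c1: "gp z \<le> al * fp x + be * fp y" unfolding gp_def fp_def al_def be_def z using cv_enn[OF d(1)] by simp
  have c2: "gp z \<le> al * fp y + be * fp x" unfolding gp_def fp_def al_def be_def z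
    using cv_enn[OF d(1), of "u y" "u x"] by (simp add: abs_minus_commute add.commute)
  have ab: "al \<le> be" unfolding al_def be_def by (rule al_le_be[OF d])
  show ?thesis
  proof (cases "x \<in> B"; cases "y \<in> B")
    assume "x \<in> B" "y \<in> B"
    have "gp z * K n R z \<le> ennreal (rt n R) * gp z"
      using mult_left_mono[OF K_le[OF R, of n z], of "gp z"] by (simp add: mult.commute)
    also have "\<dots> \<le> K n R z * (al * fp x) + K n R z * (al * fp y) + ennreal (rt n R) * gp z"
      by (rule add_increasing) auto
    finally show ?thesis using \<open>x \<in> B\<close> \<open>y \<in> B\<close> by (simp add: z)
  next
    assume "x \<in> B" "y \<notin> B"
    have "gp z * K n R z \<le> (al * fp x + be * fp y) * K n R z" by (rule mult_right_mono[OF c1]) simp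
    then show ?thesis using \<open>x \<in> B\<close> \<open>y \<notin> B\<close> by (simp add: z distrib_left distrib_right ac_simps)
  next
    assume "x \<notin> B" "y \<in> B"
    have "gp z * K n R z \<le> (al * fp y + be * fp x) * K n R z" by (rule mult_right_mono[OF c2]) simp
    then show ?thesis using \<open>x \<notin> B\<close> \<open>y \<in> B\<close> by (simp add: z distrib_left distrib_right ac_simps)
  next
    assume "x \<notin> B" "y \<notin> B"
    have "gp z \<le> be * fp x + be * fp y" using c1 ab by (meson add_right_mono mult_right_mono order_trans zero_le)
    then have "gp z * K n R z \<le> (be * fp x + be * fp y) * K n R z" by (rule mult_right_mono) simp
    then show ?thesis using \<open>x \<notin> B\<close> \<open>y \<notin> B\<close> by (simp add: z distrib_left distrib_right ac_simps)
  qed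
qed

lemma far_lower_pt:
  assumes R: "R > 0" and d: "0 < d"
  defines "al \<equiv> ennreal ((1+d) powr (p-1))" and "be \<equiv> ennreal ((1+1/d) powr (p-1))"
  shows "K n R z * (fp (fst z) * indicator B (fst z)) + K n R z * (fp (snd z) * indicator B (snd z))
     \<le> al * (gp z * K n R z) + K n R z * (be * (fp (fst z) * indicator (-B) (fst z))) + K n R z * (be * (fp (snd z) * indicator (-B) (snd z)))
     + ennreal (rt n R) * (indicator B (fst z) * indicator B (snd z) * (fp (fst z) + fp (snd z)))"
proof -
  obtain x y where z: "z = (x, y)" by (cases z)
  have c1: "fp x \<le> al * gp z + be * fp y" unfolding gp_def fp_def al_def be_def z
    using cv_enn[OF d(1), of "u x - u y" "- u y"] by simp
  have c2: "fp y \<le> al * gp z + be * fp x" unfolding gp_def fp_def al_def be_def z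
    using cv_enn[OF d(1), of "u y - u x" "- u x"] by (simp add: abs_minus_commute)
  show ?thesis
  proof (cases "x \<in> B"; cases "y \<in> B")
    assume "x \<in> B" "y \<in> B"
    have "K n R z * (fp x + fp y) \<le> ennreal (rt n R) * (fp x + fp y)"
      using K_le[OF R, of n z] by (rule mult_right_mono) simp
    then show ?thesis using \<open>x \<in> B\<close> \<open>y \<in> B\<close>
      by (simp add: z distrib_left add_increasing)
  next
    assume "x \<in> B" "y \<notin> B"
    have "K n R z * fp x \<le> K n R z * (al * gp z + be * fp y)" by (rule mult_left_mono[OF c1]) simp
    then show ?thesis using \<open>x \<in> B\<close> \<open>y \<notin> B\<close> by (simp add: z distrib_left ac_simps)
  next
    assume "x \<notin> B" "y \<in> B"
    have "K n R z * fp y \<le> K n R z * (al * gp z + be * fp x)" by (rule mult_left_mono[OF c2]) simp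
    then show ?thesis using \<open>x \<notin> B\<close> \<open>y \<in> B\<close> by (simp add: z distrib_left ac_simps)
  next
    assume "x \<notin> B" "y \<notin> B"
    then show ?thesis by (simp add: z)
  qed
qed


lemma far_upper:
  assumes R: "R > 0" and d: "0 < d" "d \<le> 1" and B[measurable]: "B \<in> sets M"
  defines "al \<equiv> ennreal ((1+d) powr (p-1))" and "be \<equiv> ennreal ((1+1/d) powr (p-1))"
  shows "Far n R \<le> al * P n R B + al * P n R B + be * Q n R B + be * Q n R B + ennreal (rt n R) * GB B"
proof -
  have Km[measurable]: "K n R \<in> borel_measurable (M \<Otimes>\<^sub>M M)" using R by simp
  have Cm[measurable]: "- B \<in> sets M" using B by (simp add: Compl_eq_Diff_UNIV space_M[symmetric] sets.compl_sets)
  have "Far n R \<le> (\<integral>\<^sup>+z. K n R z * (al * (fp (fst z) * indicator B (fst z))) + K n R z * (al * (fp (snd z) * indicator B (snd z)))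
     + K n R z * (be * (fp (fst z) * indicator (-B) (fst z))) + K n R z * (be * (fp (snd z) * indicator (-B) (snd z)))
     + ennreal (rt n R) * (indicator B (fst z) * indicator B (snd z) * gp z) \<partial>(M \<Otimes>\<^sub>M M))"
    unfolding Far_def al_def be_def by (rule nn_integral_mono) (rule far_upper_pt[OF R d])
  also have "\<dots> = (\<integral>\<^sup>+z. K n R z * (al * (fp (fst z) * indicator B (fst z))) \<partial>(M \<Otimes>\<^sub>M M))
     + (\<integral>\<^sup>+z. K n R z * (al * (fp (snd z) * indicator B (snd z))) \<partial>(M \<Otimes>\<^sub>M M))
     + (\<integral>\<^sup>+z. K n R z * (be * (fp (fst z) * indicator (-B) (fst z))) \<partial>(M \<Otimes>\<^sub>M M))
     + (\<integral>\<^sup>+z. K n R z * (be * (fp (snd z) * indicator (-B) (snd z))) \<partial>(M \<Otimes>\<^sub>M M))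
     + (\<integral>\<^sup>+z. ennreal (rt n R) * (indicator B (fst z) * indicator B (snd z) * gp z) \<partial>(M \<Otimes>\<^sub>M M))"
    by (rule nn_integral_add5) measurable
  also have "(\<integral>\<^sup>+z. K n R z * (al * (fp (fst z) * indicator B (fst z))) \<partial>(M \<Otimes>\<^sub>M M)) = al * P n R B"
    unfolding P_def using R
    by (subst TK1[where h="\<lambda>x. al * (fp x * indicator B x)"]) (auto simp: nn_integral_cmult[symmetric] mult.assoc)
  also have "(\<integral>\<^sup>+z. K n R z * (al * (fp (snd z) * indicator B (snd z))) \<partial>(M \<Otimes>\<^sub>M M)) = al * P n R B"
    unfolding P_def using R
    by (subst TK2[where h="\<lambda>x. al * (fp x * indicator B x)"]) (auto simp: nn_integral_cmult[symmetric] mult.assoc)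
  also have "(\<integral>\<^sup>+z. K n R z * (be * (fp (fst z) * indicator (-B) (fst z))) \<partial>(M \<Otimes>\<^sub>M M)) = be * Q n R B"
    unfolding Q_def using R
    by (subst TK1[where h="\<lambda>x. be * (fp x * indicator (-B) x)"]) (auto simp: nn_integral_cmult[symmetric] mult.assoc)
  also have "(\<integral>\<^sup>+z. K n R z * (be * (fp (snd z) * indicator (-B) (snd z))) \<partial>(M \<Otimes>\<^sub>M M)) = be * Q n R B"
    unfolding Q_def using R
    by (subst TK2[where h="\<lambda>x. be * (fp x * indicator (-B) x)"]) (auto simp: nn_integral_cmult[symmetric] mult.assoc)
  also have "(\<integral>\<^sup>+z. ennreal (rt n R) * (indicator B (fst z) * indicator B (snd z) * gp z) \<partial>(M \<Otimes>\<^sub>M M)) = ennreal (rt n R) * GB B"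
    unfolding GB_def by (rule nn_integral_cmult) measurable
  finally show ?thesis .
qed


lemma far_lower:
  assumes R: "R > 0" and d: "0 < d" and B[measurable]: "B \<in> sets M"
  defines "al \<equiv> ennreal ((1+d) powr (p-1))" and "be \<equiv> ennreal ((1+1/d) powr (p-1))"
  shows "P n R B + P n R B \<le> al * Far n R + be * Q n R B + be * Q n R B + ennreal (rt n R) * HB B"
proof -
  have Km[measurable]: "K n R \<in> borel_measurable (M \<Otimes>\<^sub>M M)" using R by simp
  have Cm[measurable]: "- B \<in> sets M" using B by (simp add: Compl_eq_Diff_UNIV space_M[symmetric] sets.compl_sets)
  have "P n R B + P n R B = (\<integral>\<^sup>+z. K n R z * (fp (fst z) * indicator B (fst z)) \<partial>(M \<Otimes>\<^sub>M M))
      + (\<integral>\<^sup>+z. K n R z * (fp (snd z) * indicator B (snd z)) \<partial>(M \<Otimes>\<^sub>M M))"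
  proof -
    have hm: "(\<lambda>x. fp x * indicator B x) \<in> borel_measurable M" by measurable
    show ?thesis unfolding P_def using TK1[OF _ hm, of R n] TK2[OF _ hm, of R n] R by simp
  qed
  also have "\<dots> = (\<integral>\<^sup>+z. K n R z * (fp (fst z) * indicator B (fst z)) + K n R z * (fp (snd z) * indicator B (snd z)) \<partial>(M \<Otimes>\<^sub>M M))"
    by (rule nn_integral_add[symmetric]) measurable
  also have "\<dots> \<le> (\<integral>\<^sup>+z. al * (gp z * K n R z) + K n R z * (be * (fp (fst z) * indicator (-B) (fst z))) + K n R z * (be * (fp (snd z) * indicator (-B) (snd z)))
     + ennreal (rt n R) * (indicator B (fst z) * indicator B (snd z) * (fp (fst z) + fp (snd z))) \<partial>(M \<Otimes>\<^sub>M M))"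
    unfolding al_def be_def by (rule nn_integral_mono) (rule far_lower_pt[OF R d])
  also have "\<dots> = (\<integral>\<^sup>+z. al * (gp z * K n R z) \<partial>(M \<Otimes>\<^sub>M M))
     + (\<integral>\<^sup>+z. K n R z * (be * (fp (fst z) * indicator (-B) (fst z))) \<partial>(M \<Otimes>\<^sub>M M))
     + (\<integral>\<^sup>+z. K n R z * (be * (fp (snd z) * indicator (-B) (snd z))) \<partial>(M \<Otimes>\<^sub>M M))
     + (\<integral>\<^sup>+z. ennreal (rt n R) * (indicator B (fst z) * indicator B (snd z) * (fp (fst z) + fp (snd z))) \<partial>(M \<Otimes>\<^sub>M M))"
    by (rule nn_integral_add4) measurable
  also have "(\<integral>\<^sup>+z. al * (gp z * K n R z) \<partial>(M \<Otimes>\<^sub>M M)) = al * Far n R"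
    unfolding Far_def by (rule nn_integral_cmult) measurable
  also have "(\<integral>\<^sup>+z. K n R z * (be * (fp (fst z) * indicator (-B) (fst z))) \<partial>(M \<Otimes>\<^sub>M M)) = be * Q n R B"
    unfolding Q_def using R
    by (subst TK1[where h="\<lambda>x. be * (fp x * indicator (-B) x)"]) (auto simp: nn_integral_cmult[symmetric] mult.assoc)
  also have "(\<integral>\<^sup>+z. K n R z * (be * (fp (snd z) * indicator (-B) (snd z))) \<partial>(M \<Otimes>\<^sub>M M)) = be * Q n R B"
    unfolding Q_def using R
    by (subst TK2[where h="\<lambda>x. be * (fp x * indicator (-B) x)"]) (auto simp: nn_integral_cmult[symmetric] mult.assoc)
  also have "(\<integral>\<^sup>+z. ennreal (rt n R) * (indicator B (fst z) * indicator B (snd z) * (fp (fst z) + fp (snd z))) \<partial>(M \<Otimes>\<^sub>M M)) = ennreal (rt n R) * HB B"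
    unfolding HB_def by (rule nn_integral_cmult) measurable
  finally show ?thesis .
qed


definition II where "II = (\<integral>\<^sup>+x. fp x \<partial>M)"
definition IB where "IB B = (\<integral>\<^sup>+x. fp x * indicator B x \<partial>M)"

lemma II_fin: "II < \<infinity>"
  using u_int unfolding II_def fp_def .

lemma IB_le: "IB B \<le> II"
  unfolding IB_def II_def by (rule nn_integral_mono) (auto split: split_indicator)

lemma HB_eq:
  assumes B[measurable]: "B \<in> sets M"
  shows "HB B = IB B * emeasure M B + emeasure M B * IB B"
proof -
  have "HB B = (\<integral>\<^sup>+x. \<integral>\<^sup>+y. indicator B x * indicator B y * (fp x + fp y) \<partial>M \<partial>M)"
  proof -
    have mm: "(\<lambda>z. indicator B (fst z) * indicator B (snd z) * (fp (fst z) + fp (snd z))) \<in> borel_measurable (M \<Otimes>\<^sub>M M)"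
      by measurable
    show ?thesis unfolding HB_def using nn_integral_fst[OF mm] by simp
  qed
  also have "\<dots> = (\<integral>\<^sup>+x. (fp x * indicator B x) * emeasure M B + indicator B x * IB B \<partial>M)"
  proof (rule nn_integral_cong)
    fix x
    have "(\<integral>\<^sup>+y. indicator B x * indicator B y * (fp x + fp y) \<partial>M)
      = (\<integral>\<^sup>+y. (fp x * indicator B x) * indicator B y + indicator B x * (fp y * indicator B y) \<partial>M)"
      by (rule nn_integral_cong) (simp add: distrib_left ac_simps)
    also have "\<dots> = (\<integral>\<^sup>+y. (fp x * indicator B x) * indicator B y \<partial>M) + (\<integral>\<^sup>+y. indicator B x * (fp y * indicator B y) \<partial>M)"
      by (rule nn_integral_add) measurable
    also have "\<dots> = (fp x * indicator B x) * emeasure M B + indicator B x * IB B"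
      unfolding IB_def by (simp add: nn_integral_cmult_indicator nn_integral_cmult)
    finally show "(\<integral>\<^sup>+y. indicator B x * indicator B y * (fp x + fp y) \<partial>M) = (fp x * indicator B x) * emeasure M B + indicator B x * IB B" .
  qed
  also have "\<dots> = (\<integral>\<^sup>+x. (fp x * indicator B x) * emeasure M B \<partial>M) + (\<integral>\<^sup>+x. indicator B x * IB B \<partial>M)"
    by (rule nn_integral_add) measurable
  also have "\<dots> = IB B * emeasure M B + emeasure M B * IB B"
  proof -
    have "(\<integral>\<^sup>+x. (fp x * indicator B x) * emeasure M B \<partial>M) = IB B * emeasure M B"
      unfolding IB_def by (rule nn_integral_multc) measurable
    moreover have "(\<integral>\<^sup>+x. indicator B x * IB B \<partial>M) = IB B * emeasure M B"
      using nn_integral_cmult_indicator[OF B, of "IB B"] by (simp add: mult.commute)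
    ultimately show ?thesis by (simp add: mult.commute)
  qed
  finally show ?thesis .
qed

lemma HB_fin:
  assumes B: "B \<in> sets M" "emeasure M B < \<infinity>"
  shows "HB B < \<infinity>"
proof -
  have "IB B < \<infinity>" using IB_le[of B] II_fin by (simp add: order_le_less_trans)
  then show ?thesis using HB_eq[OF B(1)] B(2) by (simp add: ennreal_mult_less_top)
qed

lemma GB_le:
  assumes B[measurable]: "B \<in> sets M"
  shows "GB B \<le> ennreal (2 powr (p-1)) * HB B"
proof -
  have "GB B \<le> (\<integral>\<^sup>+z. ennreal (2 powr (p-1)) * (indicator B (fst z) * indicator B (snd z) * (fp (fst z) + fp (snd z))) \<partial>(M \<Otimes>\<^sub>M M))"
    unfolding GB_def
  proof (rule nn_integral_mono)
    fix z :: "'a \<times> 'a"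
    have "gp z \<le> ennreal (2 powr (p-1)) * (fp (fst z) + fp (snd z))"
      using cv_enn[of 1 "u (fst z)" "u (snd z)"] unfolding gp_def fp_def by (simp add: distrib_left)
    then show "indicator B (fst z) * indicator B (snd z) * gp z \<le> ennreal (2 powr (p-1)) * (indicator B (fst z) * indicator B (snd z) * (fp (fst z) + fp (snd z)))"
      by (auto split: split_indicator)
  qed
  also have "\<dots> = ennreal (2 powr (p-1)) * HB B"
    unfolding HB_def by (rule nn_integral_cmult) measurable
  finally show ?thesis .
qed

lemma GB_fin:
  assumes B: "B \<in> sets M" "emeasure M B < \<infinity>"
  shows "GB B < \<infinity>"
  using GB_le[OF B(1)] HB_fin[OF B] by (simp add: ennreal_mult_less_top order_le_less_trans)


lemma A_fin: "A \<noteq> \<infinity>"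
  using A_le_k by (auto simp: top_unique)

lemma ball_sets[measurable]: "ball x r \<in> sets M" and cball_sets[measurable]: "- ball x r \<in> sets M"
  by (auto simp: sets_M)

lemma tail_lim: "(\<lambda>m::nat. IB (- ball x0 (real m))) \<longlonglongrightarrow> 0"
proof -
  have "(\<lambda>m. \<integral>\<^sup>+x. fp x * indicator (- ball x0 (real m)) x \<partial>M) \<longlonglongrightarrow> (\<integral>\<^sup>+x. 0 \<partial>M)"
  proof (rule nn_integral_dominated_convergence[where w=fp])
    show "\<And>j. AE x in M. fp x * indicator (- ball x0 (real j)) x \<le> fp x"
      by (auto split: split_indicator)
    show "integral\<^sup>N M fp < \<infinity>" using II_fin unfolding II_def .
    show "AE x in M. (\<lambda>j. fp x * indicator (- ball x0 (real j)) x) \<longlonglongrightarrow> 0"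
    proof (rule AE_I2)
      fix x
      obtain m0 :: nat where "dist x0 x < real m0" using reals_Archimedean2 by blast
      have "\<forall>\<^sub>F j in sequentially. fp x * indicator (- ball x0 (real j)) x = 0"
        using eventually_ge_at_top[of m0]
      proof eventually_elim
        case (elim j)
        with \<open>dist x0 x < real m0\<close> have "dist x0 x < real j" by linarith
        then show ?case by (auto split: split_indicator)
      qed
      then show "(\<lambda>j. fp x * indicator (- ball x0 (real j)) x) \<longlonglongrightarrow> 0"
        by (rule tendsto_eventually)
    qed
  qed measurable
  then show ?thesis unfolding IB_def by simp
qed

lemma IB_lim: "(\<lambda>m::nat. IB (ball x0 (real m))) \<longlonglongrightarrow> II"
proof -
  have "(\<lambda>m. \<integral>\<^sup>+x. fp x * indicator (ball x0 (real m)) x \<partial>M) \<longlonglongrightarrow> (\<integral>\<^sup>+x. fp x \<partial>M)"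
  proof (rule nn_integral_dominated_convergence[where w=fp])
    show "\<And>j. AE x in M. fp x * indicator (ball x0 (real j)) x \<le> fp x"
      by (auto split: split_indicator)
    show "integral\<^sup>N M fp < \<infinity>" using II_fin unfolding II_def .
    show "AE x in M. (\<lambda>j. fp x * indicator (ball x0 (real j)) x) \<longlonglongrightarrow> fp x"
    proof (rule AE_I2)
      fix x
      obtain m0 :: nat where "dist x0 x < real m0" using reals_Archimedean2 by blast
      have "\<forall>\<^sub>F j in sequentially. fp x * indicator (ball x0 (real j)) x = fp x"
        using eventually_ge_at_top[of m0]
      proof eventually_elim
        case (elim j)
        with \<open>dist x0 x < real m0\<close> have "dist x0 x < real j" by linarith
        then show ?case by (auto split: split_indicator)
      qed
      then show "(\<lambda>j. fp x * indicator (ball x0 (real j)) x) \<longlonglongrightarrow> fp x"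
        by (rule tendsto_eventually)
    qed
  qed measurable
  then show ?thesis unfolding IB_def II_def by simp
qed

lemma P_lim:
  assumes R: "R > 0" and C: "\<And>n x. n \<ge> N \<Longrightarrow> Phi n x R \<le> C" "C < \<infinity>" and B[measurable]: "B \<in> sets M"
  shows "(\<lambda>n. P n R B) \<longlonglongrightarrow> IB B * A"
proof (rule LIMSEQ_offset[where k=N])
  have "(\<lambda>n. \<integral>\<^sup>+x. (fp x * indicator B x) * Phi (n + N) x R \<partial>M) \<longlonglongrightarrow> (\<integral>\<^sup>+x. (fp x * indicator B x) * A \<partial>M)"
  proof (rule nn_integral_dominated_convergence[where w="\<lambda>x. (fp x * indicator B x) * C"])
    show "\<And>j. AE x in M. fp x * indicator B x * Phi (j + N) x R \<le> fp x * indicator B x * C"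
      using C(1) by (auto intro!: mult_left_mono)
    have "(\<integral>\<^sup>+x. (fp x * indicator B x) * C \<partial>M) = IB B * C"
      unfolding IB_def by (rule nn_integral_multc) measurable
    also have "\<dots> < \<infinity>" using IB_le[of B] II_fin C(2) by (simp add: ennreal_mult_less_top order_le_less_trans)
    finally show "(\<integral>\<^sup>+x. (fp x * indicator B x) * C \<partial>M) < \<infinity>" .
    show "AE x in M. (\<lambda>j. fp x * indicator B x * Phi (j + N) x R) \<longlonglongrightarrow> fp x * indicator B x * A"
    proof (rule AE_I2)
      fix x
      have "(\<lambda>j. Phi (j + N) x R) \<longlonglongrightarrow> A" using Phi_lim[OF R, of x] by (rule LIMSEQ_ignore_initial_segment)
      then show "(\<lambda>j. fp x * indicator B x * Phi (j + N) x R) \<longlonglongrightarrow> fp x * indicator B x * A"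
        by (rule tendsto_mult_ennreal[OF tendsto_const]) (use A_fin in \<open>auto simp: fp_def split: split_indicator\<close>)
    qed
    show "\<And>i. (\<lambda>x. fp x * indicator B x * Phi (i + N) x R) \<in> borel_measurable M"
    proof -
      fix i
      have [measurable]: "(\<lambda>x. Phi (i + N) x R) \<in> borel_measurable M" using R by simp
      show "(\<lambda>x. fp x * indicator B x * Phi (i + N) x R) \<in> borel_measurable M" by measurable
    qed
  qed measurable
  moreover have "(\<integral>\<^sup>+x. (fp x * indicator B x) * A \<partial>M) = IB B * A"
    unfolding IB_def by (rule nn_integral_multc) measurable
  ultimately show "(\<lambda>n. P (n + N) R B) \<longlonglongrightarrow> IB B * A" unfolding P_def by simp
qed


lemma Q_bound:
  assumes C: "\<And>x. Phi n x R \<le> C" and B[measurable]: "B \<in> sets M"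
  shows "Q n R B \<le> C * IB (- B)"
proof -
  have "Q n R B \<le> (\<integral>\<^sup>+x. (fp x * indicator (- B) x) * C \<partial>M)"
    unfolding Q_def by (rule nn_integral_mono) (use C in \<open>auto intro!: mult_left_mono\<close>)
  also have "\<dots> = IB (- B) * C"
    unfolding IB_def by (rule nn_integral_multc) measurable
  finally show ?thesis by (simp add: mult.commute)
qed

lemma al_lim: "((\<lambda>d. ennreal ((1+d) powr (p-1))) \<longlongrightarrow> 1) (at_right 0)"
proof -
  have "((\<lambda>d::real. (1+d) powr (p-1)) \<longlongrightarrow> (1+0) powr (p-1)) (at_right 0)"
    by (intro tendsto_intros) auto
  then have "((\<lambda>d. ennreal ((1+d) powr (p-1))) \<longlongrightarrow> ennreal 1) (at_right 0)"
    by (intro tendsto_ennrealI) simp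
  then show ?thesis by simp
qed

lemma far_lim:
  assumes R: "R > 0" and C: "\<And>n x. n \<ge> N \<Longrightarrow> Phi n x R \<le> C" "C < \<infinity>"
  shows "(\<lambda>n. Far n R) \<longlonglongrightarrow> A * II + A * II"
proof (rule order_tendstoI)
  obtain x0 :: 'a where True by simp
  define B where "B m = ball x0 (real m)" for m :: nat
  have Bm[measurable]: "B m \<in> sets M" "- B m \<in> sets M" for m unfolding B_def by auto
  have Bfin: "emeasure M (B m) < \<infinity>" for m unfolding B_def by (rule ball_finite)
  have Cfin: "C \<noteq> \<infinity>" using C(2) by simp
  have IIfin: "II \<noteq> \<infinity>" using II_fin by simp
  have rtlim: "(\<lambda>n. ennreal (rt n R)) \<longlonglongrightarrow> 0"
    using tendsto_ennrealI[OF rt_lim[OF R]] by simp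
  have tl: "(\<lambda>m. IB (- B m)) \<longlonglongrightarrow> 0" unfolding B_def by (rule tail_lim)
  have il: "(\<lambda>m. IB (B m)) \<longlonglongrightarrow> II" unfolding B_def by (rule IB_lim)
  have ev_d: "eventually (\<lambda>d::real. 0 < d \<and> d \<le> 1) (at_right 0)"
    by (rule eventually_at_rightI[where b=1]) auto
  {
    fix w assume w: "A * II + A * II < w"
    have "eventually (\<lambda>d. ennreal ((1+d) powr (p-1)) * (A * II) + ennreal ((1+d) powr (p-1)) * (A * II) < w) (at_right 0)"
    proof (rule order_tendstoD(2)[OF _ ])
      show "((\<lambda>d. ennreal ((1+d) powr (p-1)) * (A * II) + ennreal ((1+d) powr (p-1)) * (A * II)) \<longlongrightarrow> 1 * (A * II) + 1 * (A * II)) (at_right 0)"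
        by (intro tendsto_add tendsto_mult_ennreal[OF al_lim tendsto_const]) auto
    qed (use w in simp)
    with ev_d have "eventually (\<lambda>d. (0 < d \<and> d \<le> 1) \<and> ennreal ((1+d) powr (p-1)) * (A * II) + ennreal ((1+d) powr (p-1)) * (A * II) < w) (at_right 0)"
      by (rule eventually_conj)
    then obtain d where d: "0 < d" "d \<le> 1" and dw: "ennreal ((1+d) powr (p-1)) * (A * II) + ennreal ((1+d) powr (p-1)) * (A * II) < w"
      using eventually_happens'[OF trivial_limit_at_right_real] by blast
    define a where "a = ennreal ((1+d) powr (p-1))"
    define b where "b = ennreal ((1+1/d) powr (p-1))"
    have bfin: "b \<noteq> \<infinity>" unfolding b_def by simp
    have "eventually (\<lambda>m. a * (A * II) + a * (A * II) + b * (C * IB (- B m)) + b * (C * IB (- B m)) < w) sequentially"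
    proof (rule order_tendstoD(2))
      show "(\<lambda>m. a * (A * II) + a * (A * II) + b * (C * IB (- B m)) + b * (C * IB (- B m))) \<longlonglongrightarrow> a * (A * II) + a * (A * II) + b * (C * 0) + b * (C * 0)"
        by (intro tendsto_add tendsto_const tendsto_mult_ennreal[OF tendsto_const] tl) (use bfin Cfin in auto)
    qed (use dw a_def in simp)
    then obtain m where m: "a * (A * II) + a * (A * II) + b * (C * IB (- B m)) + b * (C * IB (- B m)) < w"
      by (auto simp: eventually_sequentially)
    have "eventually (\<lambda>n. Far n R < w) sequentially"
    proof (rule ev_upper)
      show "eventually (\<lambda>n. Far n R \<le> a * P n R (B m) + a * P n R (B m) + b * (C * IB (- B m)) + b * (C * IB (- B m)) + ennreal (rt n R) * GB (B m)) sequentially"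
        using eventually_ge_at_top[of N]
      proof eventually_elim
        case (elim n)
        have q: "Q n R (B m) \<le> C * IB (- B m)" by (rule Q_bound) (use C(1) elim in auto)
        have "Far n R \<le> a * P n R (B m) + a * P n R (B m) + b * Q n R (B m) + b * Q n R (B m) + ennreal (rt n R) * GB (B m)"
          unfolding a_def b_def by (rule far_upper[OF R d]) simp
        also have "\<dots> \<le> a * P n R (B m) + a * P n R (B m) + b * (C * IB (- B m)) + b * (C * IB (- B m)) + ennreal (rt n R) * GB (B m)"
          using q by (intro add_mono mult_left_mono order_refl) auto
        finally show ?case .
      qed
      show "(\<lambda>n. a * P n R (B m) + a * P n R (B m) + b * (C * IB (- B m)) + b * (C * IB (- B m)) + ennreal (rt n R) * GB (B m))
         \<longlonglongrightarrow> a * (IB (B m) * A) + a * (IB (B m) * A) + b * (C * IB (- B m)) + b * (C * IB (- B m)) + 0 * GB (B m)"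
        by (intro tendsto_add tendsto_const tendsto_mult_ennreal[OF tendsto_const] P_lim[OF R C] Bm rtlim tendsto_mult_ennreal[OF _ tendsto_const])
           (use GB_fin[OF Bm(1) Bfin, of m] a_def d in \<open>auto simp: less_top\<close>)
      have "a * (IB (B m) * A) \<le> a * (A * II)"
        using IB_le[of "B m"] by (simp add: mult_left_mono mult.commute)
      then have "a * (IB (B m) * A) + a * (IB (B m) * A) + b * (C * IB (- B m)) + b * (C * IB (- B m)) + 0 * GB (B m)
          \<le> a * (A * II) + a * (A * II) + b * (C * IB (- B m)) + b * (C * IB (- B m))"
        by (simp add: add_mono)
      then show "a * (IB (B m) * A) + a * (IB (B m) * A) + b * (C * IB (- B m)) + b * (C * IB (- B m)) + 0 * GB (B m) < w"
        using m by (rule le_less_trans)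
    qed
    then show "eventually (\<lambda>n. Far n R < w) sequentially" .
  }
  {
    fix w assume w: "w < A * II + A * II"
    have "eventually (\<lambda>d. ennreal ((1+d) powr (p-1)) * w < A * II + A * II) (at_right 0)"
    proof (rule order_tendstoD(2)[OF _ ])
      show "((\<lambda>d. ennreal ((1+d) powr (p-1)) * w) \<longlongrightarrow> 1 * w) (at_right 0)"
        by (intro tendsto_mult_ennreal[OF al_lim tendsto_const]) auto
    qed (use w in simp)
    with ev_d have "eventually (\<lambda>d. (0 < d \<and> d \<le> 1) \<and> ennreal ((1+d) powr (p-1)) * w < A * II + A * II) (at_right 0)"
      by (rule eventually_conj)
    then obtain d where d: "0 < d" "d \<le> 1" and dw: "ennreal ((1+d) powr (p-1)) * w < A * II + A * II"
      using eventually_happens'[OF trivial_limit_at_right_real] by blast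
    define a where "a = ennreal ((1+d) powr (p-1))"
    define b where "b = ennreal ((1+1/d) powr (p-1))"
    have bfin: "b \<noteq> \<infinity>" unfolding b_def by simp
    obtain c where c: "a * w < c" "c < A * II + A * II" using dw a_def dense by blast
    have "eventually (\<lambda>m. a * w + (b * (C * IB (- B m)) + b * (C * IB (- B m))) < c) sequentially"
    proof (rule order_tendstoD(2))
      show "(\<lambda>m. a * w + (b * (C * IB (- B m)) + b * (C * IB (- B m)))) \<longlonglongrightarrow> a * w + (b * (C * 0) + b * (C * 0))"
        by (intro tendsto_add tendsto_const tendsto_mult_ennreal[OF tendsto_const] tl) (use bfin Cfin in auto)
    qed (use c in simp)
    moreover have "eventually (\<lambda>m. c < IB (B m) * A + IB (B m) * A) sequentially"
    proof (rule order_tendstoD(1))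
      show "(\<lambda>m. IB (B m) * A + IB (B m) * A) \<longlonglongrightarrow> II * A + II * A"
        by (intro tendsto_add tendsto_mult_ennreal[OF il tendsto_const]) (use IIfin A_fin in auto)
    qed (use c in \<open>simp add: mult.commute\<close>)
    ultimately have "eventually (\<lambda>m. a * w + (b * (C * IB (- B m)) + b * (C * IB (- B m))) < c \<and> c < IB (B m) * A + IB (B m) * A) sequentially"
      by (rule eventually_conj)
    then obtain m where m: "a * w + (b * (C * IB (- B m)) + b * (C * IB (- B m))) < c" "c < IB (B m) * A + IB (B m) * A"
      by (auto simp: eventually_sequentially)
    have "eventually (\<lambda>n. a * w < a * Far n R) sequentially"
    proof (rule ev_lower2)
      show "eventually (\<lambda>n. P n R (B m) + P n R (B m) \<le> a * Far n R + (b * (C * IB (- B m)) + b * (C * IB (- B m)) + ennreal (rt n R) * HB (B m))) sequentially"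
        using eventually_ge_at_top[of N]
      proof eventually_elim
        case (elim n)
        have q: "Q n R (B m) \<le> C * IB (- B m)" by (rule Q_bound) (use C(1) elim in auto)
        have "P n R (B m) + P n R (B m) \<le> a * Far n R + b * Q n R (B m) + b * Q n R (B m) + ennreal (rt n R) * HB (B m)"
          unfolding a_def b_def by (rule far_lower[OF R d(1)]) simp
        also have "\<dots> \<le> a * Far n R + b * (C * IB (- B m)) + b * (C * IB (- B m)) + ennreal (rt n R) * HB (B m)"
          using q by (intro add_mono mult_left_mono order_refl) auto
        finally show ?case by (simp add: ac_simps)
      qed
      show "(\<lambda>n. P n R (B m) + P n R (B m)) \<longlonglongrightarrow> IB (B m) * A + IB (B m) * A"
        by (intro tendsto_add P_lim[OF R C] Bm)
      show "(\<lambda>n. b * (C * IB (- B m)) + b * (C * IB (- B m)) + ennreal (rt n R) * HB (B m)) \<longlonglongrightarrow> b * (C * IB (- B m)) + b * (C * IB (- B m)) + 0 * HB (B m)"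
        by (intro tendsto_add tendsto_const tendsto_mult_ennreal[OF rtlim tendsto_const])
           (use HB_fin[OF Bm(1) Bfin, of m] in \<open>auto simp: less_top\<close>)
      show "a * w + (b * (C * IB (- B m)) + b * (C * IB (- B m)) + 0 * HB (B m)) < IB (B m) * A + IB (B m) * A"
        using m by simp
    qed
    then show "eventually (\<lambda>n. w < Far n R) sequentially"
    proof eventually_elim
      case (elim n)
      show ?case
      proof (rule ccontr)
        assume "\<not> w < Far n R"
        then have "a * Far n R \<le> a * w" by (intro mult_left_mono) auto
        with elim show False by simp
      qed
    qed
  }
qed


definition Near where
  "Near n R = (\<integral>\<^sup>+z. gp z * K n 0 z * indicator {..R} (dist (fst z) (snd z)) \<partial>(M \<Otimes>\<^sub>M M))"

lemma energy_split:
  assumes R: "R > 0" and rho: "\<And>x y. x \<noteq> y \<Longrightarrow> \<rho> x y = rt n (dist x y)"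
  shows "energy M p \<rho> u = Near n R + Far n R"
proof -
  have K0[measurable]: "K n 0 \<in> borel_measurable (M \<Otimes>\<^sub>M M)" by simp
  have KR[measurable]: "K n R \<in> borel_measurable (M \<Otimes>\<^sub>M M)" using R by simp
  have "energy M p \<rho> u = (\<integral>\<^sup>+z. gp z * K n 0 z * indicator {..R} (dist (fst z) (snd z)) + gp z * K n R z \<partial>(M \<Otimes>\<^sub>M M))"
    unfolding energy_def
  proof (rule nn_integral_cong)
    fix z :: "'a \<times> 'a"
    obtain x y where z: "z = (x, y)" by (cases z)
    show "ennreal (\<bar>u (fst z) - u (snd z)\<bar> powr p * \<rho> (fst z) (snd z)) * indicator {z. fst z \<noteq> snd z} z
      = gp z * K n 0 z * indicator {..R} (dist (fst z) (snd z)) + gp z * K n R z"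
    proof (cases "x = y")
      case True then show ?thesis using R by (simp add: z K_def)
    next
      case False
      then have d: "dist x y > 0" by simp
      have "ennreal (\<bar>u x - u y\<bar> powr p * \<rho> x y) = gp z * ennreal (rt n (dist x y))"
        using rho[OF False] rt_pos[OF d, of n] by (simp add: z gp_def ennreal_mult)
      then show ?thesis using False d by (cases "dist x y \<le> R") (auto simp: z K_def)
    qed
  qed
  also have "\<dots> = Near n R + Far n R"
    unfolding Near_def Far_def by (rule nn_integral_add) measurable
  finally show ?thesis .
qed

lemma near_bound:
  assumes R: "R > 0" and n: "n > n0"
  shows "Near n R \<le> ennreal (rt n R / rt n0 R) * Near n0 R"
proof -
  have "Near n R \<le> (\<integral>\<^sup>+z. ennreal (rt n R / rt n0 R) * (gp z * K n0 0 z * indicator {..R} (dist (fst z) (snd z))) \<partial>(M \<Otimes>\<^sub>M M))"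
    unfolding Near_def
  proof (rule nn_integral_mono)
    fix z :: "'a \<times> 'a"
    obtain x y where z: "z = (x, y)" by (cases z)
    show "gp z * K n 0 z * indicator {..R} (dist (fst z) (snd z)) \<le> ennreal (rt n R / rt n0 R) * (gp z * K n0 0 z * indicator {..R} (dist (fst z) (snd z)))"
    proof (cases "0 < dist x y \<and> dist x y \<le> R")
      case True
      then have d: "dist x y > 0" "dist x y \<le> R" by auto
      have "rt n (dist x y) / rt n0 (dist x y) \<le> rt n R / rt n0 R"
        using ratio[OF n] d R unfolding mono_on_def by auto
      then have "rt n (dist x y) \<le> rt n R / rt n0 R * rt n0 (dist x y)"
        using rt_pos[OF d(1), of n0] by (simp add: divide_le_eq)
      then have "ennreal (rt n (dist x y)) \<le> ennreal (rt n R / rt n0 R) * ennreal (rt n0 (dist x y))"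
        using rt_pos[OF R, of n] rt_pos[OF R, of n0] rt_pos[OF d(1), of n0]
        by (simp add: ennreal_mult[symmetric] ennreal_leI)
      then have "gp z * ennreal (rt n (dist x y)) \<le> gp z * (ennreal (rt n R / rt n0 R) * ennreal (rt n0 (dist x y)))"
        by (rule mult_left_mono) simp
      then show ?thesis using d by (simp add: z K_def ac_simps)
    next
      case False
      then show ?thesis by (auto simp: z K_def)
    qed
  qed
  also have "\<dots> = ennreal (rt n R / rt n0 R) * Near n0 R"
    unfolding Near_def by (rule nn_integral_cmult) measurable
  finally show ?thesis .
qed

lemma energy_lim:
  assumes rho: "\<And>n x y. x \<noteq> y \<Longrightarrow> \<rho> n x y = rt n (dist x y)"
    and E0: "energy M p (\<rho> n0) u < \<infinity>"
  shows "(\<lambda>n. energy M p (\<rho> n) u) \<longlonglongrightarrow> 2 * A * II"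
proof -
  have "eventually (\<lambda>R. L R < 2) at_top"
    by (rule order_tendstoD(2)[OF Llim]) simp
  then have "eventually (\<lambda>R. L R < 2 \<and> (\<lambda>n. In n R) \<longlonglongrightarrow> L R \<and> R \<ge> R0) at_top"
    using Lconv' eventually_ge_at_top[of R0] by (simp add: eventually_conj_iff)
  then obtain R where R: "L R < 2" "(\<lambda>n. In n R) \<longlonglongrightarrow> L R" "R \<ge> R0"
    by (auto simp: eventually_at_top_linorder)
  have R0': "R > 0" using R(3) R0_pos by simp
  have "eventually (\<lambda>n. J n R < 2) sequentially"
    by (rule order_tendstoD(2)[OF J_lim[OF R0' R(2)] R(1)])
  then obtain N where N: "\<And>n. n \<ge> N \<Longrightarrow> J n R < 2" by (auto simp: eventually_sequentially)
  have C: "Phi n x R \<le> ennreal k * 2" if "n \<ge> N" for n x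
  proof -
    have "Phi n x R \<le> ennreal k * J n R" by (rule Phi_upper[OF R(3)])
    also have "\<dots> \<le> ennreal k * 2" using N[OF that] by (intro mult_left_mono) auto
    finally show ?thesis .
  qed
  have Cfin: "ennreal k * 2 < \<infinity>" by (simp add: ennreal_mult_less_top)
  have far: "(\<lambda>n. Far n R) \<longlonglongrightarrow> A * II + A * II"
    by (rule far_lim[OF R0' C Cfin])
  have Ens: "energy M p (\<rho> n) u = Near n R + Far n R" for n
    by (rule energy_split[OF R0']) (rule rho)
  have nfin: "Near n0 R \<noteq> \<infinity>"
  proof -
    have "Near n0 R \<le> energy M p (\<rho> n0) u" unfolding Ens by simp
    then show ?thesis using E0 by (auto simp: top_unique)
  qed
  have near: "(\<lambda>n. Near n R) \<longlonglongrightarrow> 0"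
  proof (rule tendsto_sandwich[where f="\<lambda>n. 0"])
    show "eventually (\<lambda>n. 0 \<le> Near n R) sequentially" by simp
    show "eventually (\<lambda>n. Near n R \<le> ennreal (rt n R / rt n0 R) * Near n0 R) sequentially"
      using eventually_gt_at_top[of n0] by eventually_elim (rule near_bound[OF R0'])
    have "(\<lambda>n. ennreal (rt n R / rt n0 R)) \<longlonglongrightarrow> ennreal (0 / rt n0 R)"
      by (intro tendsto_ennrealI tendsto_divide tendsto_const rt_lim R0') (use rt_pos[OF R0', of n0] in simp)
    then have "(\<lambda>n. ennreal (rt n R / rt n0 R)) \<longlonglongrightarrow> 0" by simp
    from tendsto_mult_ennreal[OF this tendsto_const[of "Near n0 R"]]
    show "(\<lambda>n. ennreal (rt n R / rt n0 R) * Near n0 R) \<longlonglongrightarrow> 0" using nfin by simp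
  qed simp
  have "(\<lambda>n. Near n R + Far n R) \<longlonglongrightarrow> 0 + (A * II + A * II)"
    by (rule tendsto_add[OF near far])
  moreover have "0 + (A * II + A * II) = 2 * A * II" by (simp add: mult_2 distrib_right)
  ultimately show ?thesis unfolding Ens by simp
qed

end

theorem mainTheorem4:
  fixes M :: "('a::{polish_space,metric_space}) measure"
    and V S :: "real \<Rightarrow> real"
    and AVR :: ennreal
    and \<rho> :: "nat \<Rightarrow> 'a \<Rightarrow> 'a \<Rightarrow> real"
    and p :: real
    and u :: "'a \<Rightarrow> real"
    and n0 :: nat
  assumes "admissible_V V S"
    and "mms M"
    and "has_AVR M V AVR"
    and "\<exists>k>0. \<exists>R. \<forall>r\<ge>R. \<forall>x. emeasure M (ball x r) \<le> ennreal (k * V r)"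
    and "approx_identity_radial V S \<rho>"
    and "p \<ge> 1"
    and "in_Lp M p u"
    and "energy M p (\<rho> n0) u < \<infinity>"
  shows "(\<lambda>n. energy M p (\<rho> n) u) \<longlonglongrightarrow> 2 * AVR * Lp_norm_pow M p u"
proof -
  have sM: "sets M = sets borel" using assms(2) unfolding mms_def by (rule conjunct1)
  obtain k R1 where k: "k > 0" and kb0: "\<forall>r\<ge>R1. \<forall>x. emeasure M (ball x r) \<le> ennreal (k * V r)"
    using assms(4) by (elim exE conjE) (rule that)
  have kb: "\<And>r x. r \<ge> R1 \<Longrightarrow> emeasure M (ball x r) \<le> ennreal (k * V r)" using kb0 by simp
  define R0 where "R0 = max R1 1"
  obtain rt L where rt: "\<forall>n. rt n C1_differentiable_on {0<..}"
      "\<forall>n r s. 0 < r \<longrightarrow> r < s \<longrightarrow> rt n s < rt n r"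
      "\<forall>r>0. (\<lambda>n. rt n r) \<longlonglongrightarrow> 0"
      "\<forall>n. ((\<lambda>r. rt n r * V r) \<longlongrightarrow> 0) at_top"
      "\<forall>n x y. x \<noteq> y \<longrightarrow> \<rho> n x y = rt n (dist x y)"
      "\<forall>n m. n > m \<longrightarrow> mono_on {0<..} (\<lambda>r. rt n r / rt m r)"
      "\<forall>\<^sub>F R in at_top. ((\<lambda>n. \<integral>\<^sup>+ r. ennreal (S r * rt n r) * indicator {R..} r \<partial>lborel) \<longlongrightarrow> L R) sequentially"
      "(L \<longlongrightarrow> 1) at_top"
    using assms(5) unfolding approx_identity_radial_def by (elim exE conjE) (rule that; assumption)
  have "\<forall>n. \<exists>Dn. (\<forall>x\<in>{0<..}. (rt n has_vector_derivative Dn x) (at x)) \<and> continuous_on {0<..} Dn"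
    using rt(1) unfolding C1_differentiable_on_def .
  from choice[OF this] obtain D where D0: "\<forall>n. (\<forall>x\<in>{0<..}. (rt n has_vector_derivative D n x) (at x)) \<and> continuous_on {0<..} (D n)"
    by (elim exE) (rule that)
  have D: "\<And>n x. x \<in> {0<..} \<Longrightarrow> (rt n has_vector_derivative D n x) (at x)"
      "\<And>n. continuous_on {0<..} (D n)"
    using D0 by simp_all
  have V0: "\<And>t. 0 \<le> t \<Longrightarrow> 0 \<le> V t" and Vd: "\<And>t. 0 \<le> t \<Longrightarrow> (V has_real_derivative S t) (at t within {0..})"
    and Sc: "continuous_on {0..} S" and Vm: "strict_mono_on {0..} V"
  proof -
    have adm: "(\<forall>t\<ge>0. V t \<ge> 0) \<and> (\<forall>t\<ge>0. (V has_real_derivative S t) (at t within {0..}))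
       \<and> continuous_on {0..} S \<and> strict_mono_on {0..} V \<and> filterlim V at_top at_top"
      using assms(1) unfolding admissible_V_def .
    then show "\<And>t. 0 \<le> t \<Longrightarrow> 0 \<le> V t" "\<And>t. 0 \<le> t \<Longrightarrow> (V has_real_derivative S t) (at t within {0..})"
      "continuous_on {0..} S" "strict_mono_on {0..} V"
      by simp_all
  qed
  interpret main_setting M V S rt D AVR L k R0 u p
  proof
    show "sets M = sets borel" by (rule sM)
    show "\<And>t. 0 \<le> t \<Longrightarrow> 0 \<le> V t" by (rule V0)
    show "\<And>t. 0 < t \<Longrightarrow> (V has_real_derivative S t) (at t)"
    proof -
      fix t :: real assume t: "0 < t"
      have "(V has_real_derivative S t) (at t within {0..})" by (rule Vd) (use t in linarith)
      then have "(V has_real_derivative S t) (at t within {0<..})"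
        by (rule DERIV_subset) (simp add: subset_eq)
      moreover have "at t within {0<..} = at t" by (rule at_within_open) (use t in auto)
      ultimately show "(V has_real_derivative S t) (at t)" by simp
    qed
    show "continuous_on {0<..} S" by (rule continuous_on_subset[OF Sc]) (simp add: subset_eq)
    show "strict_mono_on {0..} V" by (rule Vm)
    show "\<And>n t. 0 < t \<Longrightarrow> (rt n has_real_derivative D n t) (at t)"
      using D(1) unfolding has_real_derivative_iff_has_vector_derivative by simp
    show "\<And>n. continuous_on {0<..} (D n)" by (rule D(2))
    show "\<And>n r s. 0 < r \<Longrightarrow> r < s \<Longrightarrow> rt n s < rt n r" using rt(2) by simp
    show "\<And>r. 0 < r \<Longrightarrow> (\<lambda>n. rt n r) \<longlonglongrightarrow> 0" using rt(3) by simp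
    show "\<And>n. ((\<lambda>r. rt n r * V r) \<longlongrightarrow> 0) at_top" using rt(4) by simp
    show "\<And>n m. m < n \<Longrightarrow> mono_on {0<..} (\<lambda>r. rt n r / rt m r)" using rt(6) by simp
    show "\<forall>\<^sub>F R in at_top. ((\<lambda>n. \<integral>\<^sup>+ r. ennreal (S r * rt n r) * indicator {R..} r \<partial>lborel) \<longlongrightarrow> L R) sequentially" by (rule rt(7))
    show "(L \<longlongrightarrow> 1) at_top" by (rule rt(8))
    show "0 < k" by (rule k)
    show "0 < R0" unfolding R0_def by simp
    show "\<And>r x. R0 \<le> r \<Longrightarrow> emeasure M (ball x r) \<le> ennreal (k * V r)" using kb unfolding R0_def by simp
    show "\<And>x0. ((\<lambda>r. emeasure M (ball x0 r) / ennreal (V r)) \<longlongrightarrow> AVR) at_top" using assms(3) unfolding has_AVR_def by simp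
    show "1 \<le> p" by (rule assms(6))
    show "u \<in> borel_measurable M" using assms(7) unfolding in_Lp_def by (rule conjunct1)
    show "(\<integral>\<^sup>+x. ennreal (\<bar>u x\<bar> powr p) \<partial>M) < \<infinity>" using assms(7) unfolding in_Lp_def by (rule conjunct2)
  qed
  have "(\<lambda>n. energy M p (\<rho> n) u) \<longlonglongrightarrow> 2 * AVR * II"
  proof -
    have rho: "\<And>n x y. x \<noteq> y \<Longrightarrow> \<rho> n x y = rt n (dist x y)" using rt(5) by blast
    show ?thesis by (rule energy_lim[OF rho assms(8)])
  qed
  then show ?thesis unfolding II_def fp_def Lp_norm_pow_def .
qed

end
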